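(* Consider a group of $n$ agents described as rigid bodies with poses given by unit dual quaternions $\underline{\boldsymbol{x}}_i=\boldsymbol{r}_i+\varepsilon\frac{1}{2}\boldsymbol{p}_i\boldsymbol{r}_i$. Let the dynamics of each agent be $\operatorname{vec}_{8}\underline{\boldsymbol{u}}_{x,i}\triangleq\operatorname{vec}_{8}\dot{\underline{\boldsymbol{x}}}_{i}$, $i=1,\ldots,n$, with output $\underline{\boldsymbol{y}}_{i}=\log\underline{\boldsymbol{x}}_{i}$. Under the consensus protocol \[ \operatorname{vec}_{8}\underline{\boldsymbol{u}}_{x,i}=-\boldsymbol{Q}_{8}(\underline{\boldsymbol{x}}_{i})\sum_{j=1}^{n}a_{ij}\operatorname{vec}_{6}\left(\underline{\boldsymbol{y}}_{i}-\underline{\boldsymbol{y}}_{j}\right), \] the multi-agent system asymptotically achieves consensus in the output $\underline{\boldsymbol{y}}_{i}$ (i.e., $\lim_{t\to\infty}(\underline{\boldsymbol{y}}_i(t)-\underline{\boldsymbol{y}}_j(t))=0$ for all $i,j$), which implies consensus in the poses ($\lim_{t\to\infty}\underline{\boldsymbol{x}}_i=\lim_{t\to\infty}\underline{\boldsymbol{x}}_j$), if and only if the directed graph $\mathcal{G}$ describing the network topology has a directed spanning tree.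
   Context: Quaternions $\boldsymbol{h}=h_{1}+\hat{\imath}h_{2}+\hat{\jmath}h_{3}+\hat{k}h_{4}$ ($\hat{\imath}^{2}=\hat{\jmath}^{2}=\hat{k}^{2}=\hat{\imath}\hat{\jmath}\hat{k}=-1$), dual quaternions $\underline{\boldsymbol{h}}=\boldsymbol{h}+\varepsilon\boldsymbol{h}'$ ($\varepsilon^2=0$). $\boldsymbol{r}_i\in\mathbb{S}^3$ is a unit quaternion $\cos(\phi_i/2)+\boldsymbol{n}_i\sin(\phi_i/2)$, $\phi_i\in[0,2\pi)$, $\boldsymbol{n}_i$ a unit pure quaternion, and $\boldsymbol{p}_i$ a pure quaternion (translation); $\log\underline{\boldsymbol{x}}_i=\frac{1}{2}(\phi_i\boldsymbol{n}_i+\varepsilon\boldsymbol{p}_i)$ is a pure dual quaternion. $\operatorname{vec}_4,\operatorname{vec}_8$ stack the coefficients of a quaternion/dual quaternion into $\mathbb{R}^4,\mathbb{R}^8$; $\operatorname{vec}_3,\operatorname{vec}_6$ stack the imaginary coefficients of pure quaternions/pure dual quaternions into $\mathbb{R}^3,\mathbb{R}^6$. $\boldsymbol{Q}_{8}(\underline{\boldsymbol{x}})=\begin{bmatrix}\boldsymbol{Q}(\boldsymbol{r}) & \boldsymbol{0}_{4\times3}\\ \frac{1}{2}\overset{+}{\boldsymbol{H}}_{4}(\boldsymbol{p})\boldsymbol{Q}(\boldsymbol{r}) & \overset{-}{\boldsymbol{H}}_{4}(\boldsymbol{r})\begin{bmatrix}\boldsymbol{0}_{1\times3}\\ \boldsymbol{I}_3\end{bmatrix}\end{bmatrix}\in\mathbb{R}^{8\times6}$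 is the full-column-rank matrix with $\operatorname{vec}_8\dot{\underline{\boldsymbol{x}}}=\boldsymbol{Q}_8(\underline{\boldsymbol{x}})\operatorname{vec}_6\dot{\underline{\boldsymbol{y}}}$ for $\underline{\boldsymbol{y}}=\log\underline{\boldsymbol{x}}$, where $\boldsymbol{Q}(\boldsymbol{r})=\partial\operatorname{vec}_4\boldsymbol{r}/\partial\operatorname{vec}_3\log\boldsymbol{r}$, and $\overset{+}{\boldsymbol{H}}_{4},\overset{-}{\boldsymbol{H}}_{4}$ are the quaternion Hamilton operators defined by $\operatorname{vec}_4(\boldsymbol{h}_1\boldsymbol{h}_2)=\overset{+}{\boldsymbol{H}}_4(\boldsymbol{h}_1)\operatorname{vec}_4\boldsymbol{h}_2=\overset{-}{\boldsymbol{H}}_4(\boldsymbol{h}_2)\operatorname{vec}_4\boldsymbol{h}_1$. $a_{ij}$ are the entries of the adjacency matrix of the weighted directed graph $\mathcal{G}$: $a_{ij}>0$ iff there is an edge from agent $j$ to agent $i$ (agent $i$ receives information from $j$), and $a_{ij}=0$ otherwise (including $i=j$). *)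

theory Defs
  imports "HOL-Analysis.Analysis"
begin

text \<open>Quaternions are represented by their coefficient vectors in real^4
  (so vec4 is the identity); pure quaternions by their imaginary
  coefficients in real^3 (vec3); dual quaternions h + eps h' by pairs
  (vec4 h, vec4 h') in real^4 x real^4 (vec8); pure dual quaternions by
  pairs in real^3 x real^3 (vec6).\<close>

type_synonym dq = "(real^4) \<times> (real^4)"
type_synonym pdq = "(real^3) \<times> (real^3)"

definition hmul :: "real^4 \<Rightarrow> real^4 \<Rightarrow> real^4" where
  "hmul a b = vector
     [a$1*b$1 - a$2*b$2 - a$3*b$3 - a$4*b$4,
      a$1*b$2 + a$2*b$1 + a$3*b$4 - a$4*b$3,
      a$1*b$3 - a$2*b$4 + a$3*b$1 + a$4*b$2,
      a$1*b$4 + a$2*b$3 - a$3*b$2 + a$4*b$1]"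

definition qconj :: "real^4 \<Rightarrow> real^4" where
  "qconj a = vector [a$1, - a$2, - a$3, - a$4]"

definition pure :: "real^3 \<Rightarrow> real^4" where
  "pure v = vector [0, v$1, v$2, v$3]"

definition im :: "real^4 \<Rightarrow> real^3" where
  "im q = vector [q$2, q$3, q$4]"

definition qone :: "real^4" where
  "qone = vector [1, 0, 0, 0]"

definition Hplus :: "real^4 \<Rightarrow> real^4^4" where
  "Hplus h = matrix (\<lambda>q. hmul h q)"

definition Hminus :: "real^4 \<Rightarrow> real^4^4" where
  "Hminus h = matrix (\<lambda>q. hmul q h)"

text \<open>the 4x3 matrix [0_{1x3}; I_3]\<close>
definition E43 :: "real^3^4" where
  "E43 = matrix pure"

definition qexp :: "real^3 \<Rightarrow> real^4" where
  "qexp u = (if u = 0 then qone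
             else cos (norm u) *\<^sub>R qone + (sin (norm u) / norm u) *\<^sub>R pure u)"

text \<open>vec3 of the logarithm of a unit quaternion r = cos(phi/2) + n sin(phi/2),
  phi in [0, 2 pi): log r = (phi/2) n, i.e. phi/2 = arccos (r$1) and
  n = im r / |im r| (n irrelevant when phi = 0).\<close>
definition qlog :: "real^4 \<Rightarrow> real^3" where
  "qlog r = (arccos (r$1) / norm (im r)) *\<^sub>R im r"

text \<open>Q(r) = d vec4 r / d vec3 log r : Jacobian of the exponential map
  evaluated at log r\<close>
definition Qmat :: "real^4 \<Rightarrow> real^3^4" where
  "Qmat r = jacobian qexp (at (qlog r))"

definition unit_dq :: "dq \<Rightarrow> bool" where
  "unit_dq x \<longleftrightarrow> (\<exists>r p. norm r = 1 \<and> (\<exists>\<phi> n. 0 \<le> \<phi> \<and> \<phi> < 2*pi \<and> norm n = 1 \<and>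
        r = cos (\<phi>/2) *\<^sub>R qone + sin (\<phi>/2) *\<^sub>R pure n)
      \<and> x = (r, (1/2) *\<^sub>R hmul (pure p) r))"

text \<open>rotation part r and translation p (pure, as vec3) of x = r + eps (1/2) p r\<close>
definition dq_rot :: "dq \<Rightarrow> real^4" where
  "dq_rot x = fst x"

definition dq_trans :: "dq \<Rightarrow> real^3" where
  "dq_trans x = 2 *\<^sub>R im (hmul (snd x) (qconj (fst x)))"

text \<open>vec6 (log x) = vec6 ((1/2)(phi n + eps p)) = (vec3 log r, vec3 (p/2))\<close>
definition dq_log :: "dq \<Rightarrow> pdq" where
  "dq_log x = (qlog (dq_rot x), (1/2) *\<^sub>R dq_trans x)"

text \<open>Q8(x) applied to a vec6 vector (u, v), written blockwise:
  Q8(x) = [Q(r), 0; (1/2) H+(p) Q(r), H-(r) [0;I]]\<close>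
definition Q8 :: "dq \<Rightarrow> pdq \<Rightarrow> dq" where
  "Q8 x w = (let r = dq_rot x; p = pure (dq_trans x) in
     (Qmat r *v fst w,
      ((1/2) *\<^sub>R (Hplus p ** Qmat r)) *v fst w + (Hminus r ** E43) *v snd w))"

text \<open>closed-loop trajectories (agents indexed 0..n-1) on [0, infinity)\<close>
definition closed_loop_solution ::
    "nat \<Rightarrow> (nat \<Rightarrow> nat \<Rightarrow> real) \<Rightarrow> (nat \<Rightarrow> real \<Rightarrow> dq) \<Rightarrow> bool" where
  "closed_loop_solution n a x \<longleftrightarrow>
     (\<forall>i<n. \<forall>t\<ge>0. unit_dq (x i t) \<and>
        (x i has_vector_derivative
           - Q8 (x i t) (\<Sum>j<n. a i j *\<^sub>R (dq_log (x i t) - dq_log (x j t))))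
          (at t within {0..}))"

definition achieves_output_consensus ::
    "nat \<Rightarrow> (nat \<Rightarrow> nat \<Rightarrow> real) \<Rightarrow> bool" where
  "achieves_output_consensus n a \<longleftrightarrow>
     (\<forall>x. closed_loop_solution n a x \<longrightarrow>
        (\<forall>i<n. \<forall>j<n. ((\<lambda>t. dq_log (x i t) - dq_log (x j t)) \<longlongrightarrow> 0) at_top))"

text \<open>edge j -> i iff a i j > 0. A directed spanning tree: a root k and a
  parent map par (edge par i -> i for every non-root node) such that
  following parents from any node reaches the root.\<close>
definition has_directed_spanning_tree :: "nat \<Rightarrow> (nat \<Rightarrow> nat \<Rightarrow> real) \<Rightarrow> bool" where
  "has_directed_spanning_tree n a \<longleftrightarrow>
     (\<exists>k<n. \<exists>par. \<forall>i<n. i \<noteq> k \<longrightarrow>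
        par i < n \<and> a i (par i) > 0 \<and> (\<exists>m. (par ^^ m) i = k))"

end

theory Submission
  imports Defs
begin


lemma vec4_nth [simp]:
  "(vector [a, b, c, d] :: 'a::zero^4) $ 1 = a"
  "(vector [a, b, c, d] :: 'a::zero^4) $ 2 = b"
  "(vector [a, b, c, d] :: 'a::zero^4) $ 3 = c"
  "(vector [a, b, c, d] :: 'a::zero^4) $ 4 = d"
  by (simp_all add: vector_def)
lemma vec3_nth [simp]:
  "(vector [a, b, c] :: 'a::zero^3) $ 1 = a"
  "(vector [a, b, c] :: 'a::zero^3) $ 2 = b"
  "(vector [a, b, c] :: 'a::zero^3) $ 3 = c"
  by (simp_all add: vector_def)

lemma linear_pure: "linear pure"
  by (rule linearI) (simp_all add: pure_def vec_eq_iff forall_4)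
lemma bl_pure: "bounded_linear pure"
  using linear_pure by (simp add: linear_conv_bounded_linear)
lemma linear_im: "linear im"
  by (rule linearI) (simp_all add: im_def vec_eq_iff forall_3)
lemma bl_im: "bounded_linear im"
  using linear_im by (simp add: linear_conv_bounded_linear)
lemma linear_qconj: "linear qconj"
  by (rule linearI) (simp_all add: qconj_def vec_eq_iff forall_4)
lemma bl_qconj: "bounded_linear qconj"
  using linear_qconj by (simp add: linear_conv_bounded_linear)
lemma bilinear_hmul: "bilinear hmul"
  unfolding bilinear_def
  by (auto intro!: linearI simp: hmul_def vec_eq_iff forall_4 algebra_simps)
lemma bb_hmul: "bounded_bilinear hmul"
  using bilinear_hmul by (simp add: bilinear_conv_bounded_bilinear)
lemma hmul_assoc: "hmul (hmul a b) c = hmul a (hmul b c)"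
  by (simp add: hmul_def vec_eq_iff forall_4 algebra_simps)
lemma norm4: "norm (q::real^4) = sqrt ((q$1)^2 + (q$2)^2 + (q$3)^2 + (q$4)^2)"
  unfolding norm_eq_sqrt_inner inner_vec_def sum_4 by (simp add: power2_eq_square)
lemma norm3: "norm (q::real^3) = sqrt ((q$1)^2 + (q$2)^2 + (q$3)^2)"
  unfolding norm_eq_sqrt_inner inner_vec_def sum_3 by (simp add: power2_eq_square)
lemma hmul_conj: "hmul r (qconj r) = (norm r)^2 *\<^sub>R qone"
  by (simp add: hmul_def qconj_def qone_def norm4 vec_eq_iff forall_4 algebra_simps power2_eq_square)
lemma norm_pure: "norm (pure p) = norm p"
  by (simp add: norm4 norm3 pure_def)
lemma im_pure: "im (pure p) = p"
  by (simp add: im_def pure_def vec_eq_iff forall_3)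
lemma hmul_qone: "hmul q qone = q"
  by (simp add: hmul_def qone_def vec_eq_iff forall_4)
lemma linear_hmul_l: "linear (\<lambda>q. hmul p q)"
  using bilinear_hmul unfolding bilinear_def by simp
lemma linear_hmul_r: "linear (\<lambda>q. hmul q p)"
  using bilinear_hmul unfolding bilinear_def by simp
lemma Hplus_mv: "Hplus p *v y = hmul p y"
  unfolding Hplus_def using linear_hmul_l by (simp add: matrix_vector_mul(2)[of "\<lambda>q. hmul p q", THEN fun_cong])
lemma Hminus_mv: "Hminus p *v y = hmul y p"
  unfolding Hminus_def using linear_hmul_r by (simp add: matrix_vector_mul(2)[of "\<lambda>q. hmul q p", THEN fun_cong])
lemma E43_mv: "E43 *v v = pure v"
  unfolding E43_def using linear_pure by (simp add: matrix_vector_mul(2)[of pure, THEN fun_cong])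


lemma hmul_scaleR_l: "hmul (c *\<^sub>R a) b = c *\<^sub>R hmul a b"
  using bounded_bilinear.scaleR_left[OF bb_hmul] .
lemma hmul_scaleR_r: "hmul a (c *\<^sub>R b) = c *\<^sub>R hmul a b"
  using bounded_bilinear.scaleR_right[OF bb_hmul] .
lemma hmul_add_l: "hmul (a + a') b = hmul a b + hmul a' b"
  using bounded_bilinear.add_left[OF bb_hmul] .
lemma hmul_add_r: "hmul a (b + b') = hmul a b + hmul a b'"
  using bounded_bilinear.add_right[OF bb_hmul] .
lemma hmul_diff_l: "hmul (a - a') b = hmul a b - hmul a' b"
  using bounded_bilinear.diff_left[OF bb_hmul] .
lemma hmul_minus_l: "hmul (- a) b = - hmul a b"
  using bounded_bilinear.minus_left[OF bb_hmul] .
lemma hmul_minus_r: "hmul a (- b) = - hmul a b"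
  using bounded_bilinear.minus_right[OF bb_hmul] .
lemma hmul_zero_r: "hmul a 0 = 0"
  using bounded_bilinear.zero_right[OF bb_hmul] .
lemma im_scaleR: "im (c *\<^sub>R q) = c *\<^sub>R im q"
  using linear_im by (simp add: linear_scale)
lemma im_minus: "im (- q) = - im q"
  using linear_im by (simp add: linear_neg)

lemma unit_dq_facts:
  assumes "unit_dq x"
  shows "norm (fst x) = 1" "snd x = (1/2) *\<^sub>R hmul (pure (dq_trans x)) (fst x)"
proof -
  obtain r p where rp: "norm r = 1" "x = (r, (1/2) *\<^sub>R hmul (pure p) r)"
    using assms unfolding unit_dq_def by blast
  have "dq_trans x = p"
    unfolding dq_trans_def rp(2)
    by (simp add: hmul_scaleR_l hmul_assoc hmul_conj rp(1) hmul_scaleR_r hmul_qone im_scaleR im_pure)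
  then show "norm (fst x) = 1" "snd x = (1/2) *\<^sub>R hmul (pure (dq_trans x)) (fst x)"
    using rp by auto
qed

lemma nontriv: "t \<ge> (0::real) \<Longrightarrow> at t within {0..} \<noteq> bot"
proof -
  assume t: "t \<ge> 0"
  have "at_right t \<le> at t within {0..}" using t by (intro at_le) auto
  then show ?thesis using trivial_limit_at_right_real[of t] by (metis bot.extremum_uniqueI)
qed

lemma trans_deriv:
  fixes x :: "real \<Rightarrow> dq"
  assumes unit: "\<And>s. s \<ge> 0 \<Longrightarrow> unit_dq (x s)" and t: "t \<ge> 0"
    and der: "(x has_vector_derivative - Q8 (x t) (u, v)) (at t within {0..})"
  shows "((\<lambda>s. (1/2) *\<^sub>R dq_trans (x s)) has_vector_derivative - v) (at t within {0..})"
proof -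
  define r where "r s = fst (x s)" for s
  define q where "q s = snd (x s)" for s
  define p where "p = pure (dq_trans (x t))"
  define R' where "R' = - (Qmat (r t) *v u)"
  define Q' where "Q' = (1/2) *\<^sub>R hmul p R' - hmul (pure v) (r t)"
  have dr: "(r has_vector_derivative R') (at t within {0..})"
    unfolding r_def R'_def using bounded_linear.has_vector_derivative[OF bounded_linear_fst der]
    by (simp add: Q8_def Let_def dq_rot_def)
  have dq: "(q has_vector_derivative Q') (at t within {0..})"
  proof -
    have "(q has_vector_derivative snd (- Q8 (x t) (u, v))) (at t within {0..})"
      unfolding q_def using bounded_linear.has_vector_derivative[OF bounded_linear_snd der] by simp
    moreover have "snd (- Q8 (x t) (u, v)) = Q'"
      unfolding Q8_def Let_def Q'_def R'_def p_def dq_rot_def r_def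
      by (simp add: matrix_vector_mul_assoc[symmetric] scaleR_matrix_vector_assoc[symmetric]
          Hplus_mv Hminus_mv E43_mv hmul_minus_r)
    ultimately show ?thesis by simp
  qed
  have drc: "((\<lambda>s. qconj (r s)) has_vector_derivative qconj R') (at t within {0..})"
    using bounded_linear.has_vector_derivative[OF bl_qconj dr] .
  have d1: "((\<lambda>s. hmul (r s) (qconj (r s))) has_vector_derivative hmul (r t) (qconj R') + hmul R' (qconj (r t))) (at t within {0..})"
    using bounded_bilinear.has_vector_derivative[OF bb_hmul dr drc] .
  have "((\<lambda>s. hmul (r s) (qconj (r s))) has_vector_derivative 0) (at t within {0..})"
  proof (rule has_vector_derivative_transform[of t "{0..}" _ "\<lambda>s. qone"])
    show "t \<in> {0..}" using t by simp
    fix s :: real assume "s \<in> {0..}"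
    then show "hmul (r s) (qconj (r s)) = qone"
      using unit_dq_facts(1)[OF unit[of s]] unfolding r_def by (simp add: hmul_conj)
  qed (rule has_vector_derivative_const)
  then have zero: "hmul (r t) (qconj R') + hmul R' (qconj (r t)) = 0"
    using vector_derivative_unique_within[OF nontriv[OF t] d1] by simp
  have d2: "((\<lambda>s. hmul (q s) (qconj (r s))) has_vector_derivative hmul (q t) (qconj R') + hmul Q' (qconj (r t))) (at t within {0..})"
    using bounded_bilinear.has_vector_derivative[OF bb_hmul dq drc] .
  have qt: "q t = (1/2) *\<^sub>R hmul p (r t)"
    unfolding q_def p_def r_def using unit_dq_facts(2)[OF unit[OF t]] .
  have "hmul (q t) (qconj R') + hmul Q' (qconj (r t))
      = (1/2) *\<^sub>R hmul p (hmul (r t) (qconj R') + hmul R' (qconj (r t))) - hmul (pure v) (hmul (r t) (qconj (r t)))"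
    unfolding qt Q'_def
    by (simp add: hmul_scaleR_l hmul_assoc hmul_diff_l hmul_add_r algebra_simps)
  also have "\<dots> = - pure v"
    unfolding zero using unit_dq_facts(1)[OF unit[OF t]]
    by (simp add: hmul_zero_r hmul_conj r_def hmul_qone)
  finally have eq: "hmul (q t) (qconj R') + hmul Q' (qconj (r t)) = - pure v" .
  have "((\<lambda>s. im (hmul (q s) (qconj (r s)))) has_vector_derivative
        im (hmul (q t) (qconj R') + hmul Q' (qconj (r t)))) (at t within {0..})"
    using bounded_linear.has_vector_derivative[OF bl_im d2] .
  from this[unfolded eq] show ?thesis unfolding dq_trans_def q_def r_def by (simp add: im_minus im_pure)
qed



definition Jq :: "real^3 \<Rightarrow> real^3 \<Rightarrow> real^4" where
  "Jq w h = (if w = 0 then pure h else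
     (sin (norm w) / norm w) *\<^sub>R pure h
     + ((cos (norm w) * inner h (sgn w) * norm w - sin (norm w) * inner h (sgn w)) / (norm w * norm w)) *\<^sub>R pure w
     - (inner h (sgn w) * sin (norm w)) *\<^sub>R qone)"

lemma qexp_deriv_nz:
  assumes w: "w \<noteq> 0"
  shows "(qexp has_derivative Jq w) (at w)"
proof -
  define g where "g y = cos (norm y) *\<^sub>R qone + (sin (norm y) / norm y) *\<^sub>R pure y" for y :: "real^3"
  have dn: "(norm has_derivative (\<lambda>h. inner h (sgn w))) (at w)"
    using has_derivative_norm[OF w] .
  have dp: "(pure has_derivative pure) (at w)" using bounded_linear.has_derivative[OF bl_pure has_derivative_ident] by simp
  have coef: "y \<bullet> sgn w * cos (norm w) / norm w - sin (norm w) * (inverse (norm w) * (y \<bullet> sgn w) * inverse (norm w))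
     = (cos (norm w) * (y \<bullet> sgn w) * norm w - sin (norm w) * (y \<bullet> sgn w)) / (norm w * norm w)" for y
    using w by (simp add: field_simps)
  have gd: "(g has_derivative Jq w) (at w)"
    unfolding g_def
    apply (rule has_derivative_eq_rhs)
     apply (rule derivative_eq_intros dn dp | simp add: w)+
    apply (rule ext)
    apply (simp only: coef Jq_def w if_False)
    done
  have op: "open {y :: real^3. y \<noteq> 0}" by (simp add: open_Collect_neq)
  have eqs: "\<And>y. y \<in> {y. y \<noteq> 0} \<Longrightarrow> g y = qexp y" by (simp add: g_def qexp_def)
  show ?thesis using has_derivative_transform_within_open[OF gd op _ eqs] w by simp
qed

lemma norm_qone: "norm qone = 1"
  unfolding qone_def norm_eq_sqrt_inner inner_vec_def sum_4 by simp

lemma cos_sub_bound: "\<bar>cos x - 1\<bar> \<le> (x::real)^2 / 2"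
proof -
  have "cos x = cos (2 * (x/2))" by simp
  also have "\<dots> = 1 - 2 * sin (x/2) ^ 2" by (rule cos_double_sin)
  finally have c: "cos x - 1 = - 2 * sin (x/2) ^ 2" by simp
  have "\<bar>sin (x/2)\<bar> ^ 2 \<le> \<bar>x/2\<bar>^2"
    using abs_sin_x_le_abs_x[of "x/2"] by (intro power_mono) auto
  then have "sin (x/2) ^ 2 \<le> (x/2)^2" by (simp only: power2_abs)
  then show ?thesis unfolding c by (simp add: power_divide)
qed

lemma sin_sub_bound: "\<bar>sin x - x\<bar> \<le> (x::real)^2 / 2"
proof -
  have "\<bar>sin x - (\<Sum>m<2. sin_coeff m * x ^ m)\<bar> \<le> inverse (fact 2) * \<bar>x\<bar> ^ 2"
    by (rule Maclaurin_sin_bound)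
  moreover have "(\<Sum>m<2. sin_coeff m * x ^ m) = x"
    by (simp add: numeral_2_eq_2 sin_coeff_def)
  moreover have "inverse (fact 2) * \<bar>x\<bar> ^ 2 = x^2 / 2" by (simp add: power2_abs)
  ultimately show ?thesis by simp
qed

lemma qexp_deriv_0: "(qexp has_derivative pure) (at 0)"
  unfolding has_derivative_at_alt
proof (intro conjI allI impI bl_pure)
  fix e :: real assume e: "e > 0"
  show "\<exists>d>0. \<forall>y. norm (y - 0) < d \<longrightarrow> norm (qexp y - qexp 0 - pure (y - 0)) \<le> e * norm (y - 0)"
  proof (intro exI[of _ e] conjI allI impI e)
    fix y :: "real^3" assume y: "norm (y - 0) < e"
    show "norm (qexp y - qexp 0 - pure (y - 0)) \<le> e * norm (y - 0)"
    proof (cases "y = 0")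
      case True then show ?thesis by (simp add: qexp_def linear_0[OF linear_pure])
    next
      case False
      define \<rho> where "\<rho> = norm y"
      have \<rho>: "\<rho> > 0" using False by (simp add: \<rho>_def)
      have eq: "qexp y - qexp 0 - pure (y - 0) = (cos \<rho> - 1) *\<^sub>R qone + (sin \<rho> / \<rho> - 1) *\<^sub>R pure y"
        using False by (simp add: qexp_def \<rho>_def algebra_simps)
      have "norm (qexp y - qexp 0 - pure (y - 0)) \<le> \<bar>cos \<rho> - 1\<bar> * norm qone + \<bar>sin \<rho> / \<rho> - 1\<bar> * norm (pure y)"
        unfolding eq by (rule order_trans[OF norm_triangle_ineq]) simp
      also have "\<dots> = \<bar>cos \<rho> - 1\<bar> + \<bar>sin \<rho> - \<rho>\<bar>"
      proof -
        have m: "(sin \<rho> / \<rho> - 1) * \<rho> = sin \<rho> - \<rho>" using \<rho> by (simp add: field_simps)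
        have "\<bar>sin \<rho> / \<rho> - 1\<bar> * \<rho> = \<bar>sin \<rho> - \<rho>\<bar>"
          by (metis m abs_mult abs_of_pos \<rho>)
        then show ?thesis using norm_qone by (simp add: norm_pure \<rho>_def)
      qed
      also have "\<dots> \<le> \<rho>^2/2 + \<rho>^2/2" using sin_sub_bound cos_sub_bound by (intro add_mono)
      also have "\<dots> = \<rho> * \<rho>" by (simp add: power2_eq_square)
      also have "\<dots> \<le> e * \<rho>" using y \<rho> by (intro mult_right_mono) (auto simp: \<rho>_def)
      finally show ?thesis by (simp add: \<rho>_def)
    qed
  qed
qed

lemma qexp_deriv: "(qexp has_derivative Jq w) (at w)"
proof -
  have "Jq 0 = pure" by (simp add: Jq_def fun_eq_iff)
  then show ?thesis using qexp_deriv_nz[of w] qexp_deriv_0 by (cases "w = 0") auto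
qed

lemma Jq_inj:
  assumes w: "norm w < pi" and J: "Jq w h = 0"
  shows "h = 0"
proof (cases "w = 0")
  case True
  then have "pure h = 0" using J by (simp add: Jq_def)
  then show ?thesis using im_pure[of h] by (simp add: im_def vec_eq_iff forall_3)
next
  case False
  define \<rho> where "\<rho> = norm w"
  have \<rho>: "\<rho> > 0" "\<rho> < pi" using False w by (auto simp: \<rho>_def)
  have s: "sin \<rho> > 0" using \<rho> by (intro sin_gt_zero) auto
  have "(Jq w h) $ 1 = - (inner h (sgn w) * sin \<rho>)"
    using False by (simp add: Jq_def pure_def qone_def \<rho>_def)
  then have "inner h (sgn w) * sin \<rho> = 0" using J by simp
  then have i0: "inner h (sgn w) = 0" using s by simp
  then have "(sin \<rho> / \<rho>) *\<^sub>R pure h = 0" using J False by (simp add: Jq_def \<rho>_def)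
  then have "pure h = 0" using s \<rho> by simp
  then show ?thesis using im_pure[of h] by (simp add: im_def vec_eq_iff forall_3)
qed


definition unitrot :: "real^4 \<Rightarrow> bool" where
  "unitrot r \<longleftrightarrow> (\<exists>\<phi> nn. 0 \<le> \<phi> \<and> \<phi> < 2*pi \<and> norm nn = 1 \<and>
        r = cos (\<phi>/2) *\<^sub>R qone + sin (\<phi>/2) *\<^sub>R pure nn)"

lemma im_qone: "im qone = 0"
  by (simp add: im_def qone_def vec_eq_iff forall_3)

lemma unitrot_facts:
  assumes "unitrot r"
  obtains \<phi> nn where "0 \<le> \<phi>" "\<phi> < 2*pi" "norm nn = 1" "r $ 1 = cos (\<phi>/2)" "im r = sin (\<phi>/2) *\<^sub>R nn"
    "qlog r = (\<phi>/2) *\<^sub>R nn" "qexp (qlog r) = r" "norm (qlog r) = \<phi>/2" "arccos (r $ 1) = \<phi>/2"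
    "r = cos (\<phi>/2) *\<^sub>R qone + sin (\<phi>/2) *\<^sub>R pure nn"
proof -
  obtain \<phi> nn where \<phi>: "0 \<le> \<phi>" "\<phi> < 2*pi" "norm nn = 1" and r: "r = cos (\<phi>/2) *\<^sub>R qone + sin (\<phi>/2) *\<^sub>R pure nn"
    using assms unfolding unitrot_def by blast
  have r1: "r $ 1 = cos (\<phi>/2)" unfolding r by (simp add: qone_def pure_def)
  have imr: "im r = sin (\<phi>/2) *\<^sub>R nn" unfolding r
    using linear_im by (simp add: linear_add linear_scale im_qone im_pure)
  have s0: "sin (\<phi>/2) \<ge> 0" using \<phi> by (intro sin_ge_zero) auto
  have ac: "arccos (r $ 1) = \<phi>/2" unfolding r1 using \<phi> by (intro arccos_cos) auto
  have nim: "norm (im r) = sin (\<phi>/2)" unfolding imr using \<phi>(3) s0 by simp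
  show ?thesis
  proof (cases "sin (\<phi>/2) = 0")
    case True
    have "\<phi> = 0"
    proof (rule ccontr)
      assume "\<phi> \<noteq> 0"
      then have "sin (\<phi>/2) > 0" using \<phi> by (intro sin_gt_zero) auto
      then show False using True by simp
    qed
    then have rq: "r = qone" unfolding r by simp
    have ql: "qlog r = 0" unfolding qlog_def rq im_qone by simp
    show ?thesis
      by (rule that[OF \<phi> r1 imr]) (use \<open>\<phi> = 0\<close> ql rq ac r in \<open>auto simp: qexp_def\<close>)
  next
    case False
    then have sp: "sin (\<phi>/2) > 0" using s0 by simp
    have ql: "qlog r = (\<phi>/2) *\<^sub>R nn"
      unfolding qlog_def ac nim imr using sp \<phi>(3) by simp
    have phip: "\<phi> > 0" using sp \<phi>(1) by (cases "\<phi> = 0") auto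
    have nq: "norm (qlog r) = \<phi>/2" unfolding ql using \<phi> by simp
    have "qexp (qlog r) = r"
    proof -
      have "qlog r \<noteq> 0" using nq phip by auto
      then have "qexp (qlog r) = cos (\<phi>/2) *\<^sub>R qone + (sin (\<phi>/2) / (\<phi>/2)) *\<^sub>R pure ((\<phi>/2) *\<^sub>R nn)"
        unfolding qexp_def nq by (simp add: ql)
      also have "\<dots> = r" unfolding r using phip linear_pure by (simp add: linear_scale)
      finally show ?thesis .
    qed
    then show ?thesis by (rule that[OF \<phi> r1 imr ql _ nq ac r])
  qed
qed

lemma qlog_tendsto:
  fixes r :: "real \<Rightarrow> real^4"
  assumes rt: "(r \<longlongrightarrow> r t) (at t within S)" and U: "\<And>s. s \<in> S \<Longrightarrow> unitrot (r s)" and t: "t \<in> S"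
  shows "((\<lambda>s. qlog (r s)) \<longlongrightarrow> qlog (r t)) (at t within S)"
proof -
  obtain \<phi> nn where \<phi>: "0 \<le> \<phi>" "\<phi> < 2*pi" "norm nn = 1" "r t $ 1 = cos (\<phi>/2)" "im (r t) = sin (\<phi>/2) *\<^sub>R nn"
    "qlog (r t) = (\<phi>/2) *\<^sub>R nn"
    using unitrot_facts[OF U[OF t]] by metis
  show ?thesis
  proof (cases "sin (\<phi>/2) = 0")
    case False
    have nz: "norm (im (r t)) \<noteq> 0" using \<phi>(3,5) False by simp
    have c1: "\<bar>cos (\<phi>/2)\<bar> < 1"
    proof -
      have "(sin (\<phi>/2))^2 + (cos (\<phi>/2))^2 = 1" by simp
      moreover have "(sin (\<phi>/2))^2 > 0" using False by simp
      ultimately have "(cos (\<phi>/2))^2 < 1" by linarith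
      then show ?thesis by (simp add: abs_square_less_1)
    qed
    have ac: "isCont arccos (r t $ 1)" using c1 \<phi>(4) by (intro isCont_arccos) auto
    have t1: "((\<lambda>s. r s $ 1) \<longlongrightarrow> r t $ 1) (at t within S)" using rt by (rule tendsto_vec_nth)
    have t2: "((\<lambda>s. im (r s)) \<longlongrightarrow> im (r t)) (at t within S)"
      using bounded_linear.tendsto[OF bl_im rt] .
    have "((\<lambda>s. (arccos (r s $ 1) / norm (im (r s))) *\<^sub>R im (r s)) \<longlongrightarrow>
        (arccos (r t $ 1) / norm (im (r t))) *\<^sub>R im (r t)) (at t within S)"
      by (intro tendsto_scaleR tendsto_divide tendsto_norm t2 isCont_tendsto_compose[OF ac t1] nz)
    then show ?thesis unfolding qlog_def .
  next
    case True
    have "\<phi> = 0"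
    proof (rule ccontr)
      assume "\<phi> \<noteq> 0"
      then have "sin (\<phi>/2) > 0" using \<phi> by (intro sin_gt_zero) auto
      then show False using True by simp
    qed
    then have q0: "qlog (r t) = 0" and r1: "r t $ 1 = 1" using \<phi> by auto
    have t1: "((\<lambda>s. r s $ 1) \<longlongrightarrow> 1) (at t within S)" using tendsto_vec_nth[OF rt, of 1] r1 by simp
    have inS: "\<forall>\<^sub>F s in at t within S. s \<in> S" unfolding eventually_at_filter by simp
    have facts: "r s $ 1 \<in> {-1..1} \<and> norm (qlog (r s)) = arccos (r s $ 1)" if "s \<in> S" for s
    proof -
      have us: "unitrot (r s)" using U that by blast
      obtain \<psi> mm where "r s $ 1 = cos (\<psi>/2)" "norm (qlog (r s)) = \<psi>/2" "arccos (r s $ 1) = \<psi>/2"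
        using unitrot_facts[OF us] by metis
      then show ?thesis by simp
    qed
    have ev: "\<forall>\<^sub>F s in at t within S. r s $ 1 \<in> {-1..1}"
      using inS by (rule eventually_mono) (use facts in blast)
    have "((\<lambda>s. arccos (r s $ 1)) \<longlongrightarrow> arccos 1) (at t within S)"
      by (rule continuous_on_tendsto_compose[OF continuous_on_arccos' t1 _ ev]) simp
    then have a0: "((\<lambda>s. arccos (r s $ 1)) \<longlongrightarrow> 0) (at t within S)" by simp
    have "\<forall>\<^sub>F s in at t within S. arccos (r s $ 1) = norm (qlog (r s))"
      using inS by (rule eventually_mono) (use facts in auto)
    then have "((\<lambda>s. norm (qlog (r s))) \<longlongrightarrow> 0) (at t within S)"
      using a0 by (rule Lim_transform_eventually[rotated])
    then show ?thesis unfolding q0 by (simp add: tendsto_norm_zero_iff)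
  qed
qed



lemma inv_deriv:
  fixes f :: "'a::real_normed_vector \<Rightarrow> 'b::real_normed_vector" and w :: "real \<Rightarrow> 'a" and r :: "real \<Rightarrow> 'b"
  assumes fd: "(f has_derivative J) (at (w t))"
    and Jb: "\<And>d. c * norm d \<le> norm (J d)" and c: "c > 0"
    and wc: "(w \<longlongrightarrow> w t) (at t within S)"
    and fw: "\<And>s. s \<in> S \<Longrightarrow> f (w s) = r s" and t: "t \<in> S"
    and rd: "(r has_vector_derivative J u) (at t within S)"
  shows "(w has_vector_derivative u) (at t within S)"
  unfolding has_vector_derivative_def has_derivative_within_alt
proof (intro conjI allI impI bounded_linear_scaleR_left)
  fix e :: real assume e: "e > 0"
  have blJ: "bounded_linear J" using fd by (rule has_derivative_bounded_linear)
  define K where "K = norm u"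
  have K: "K \<ge> 0" unfolding K_def by simp
  define \<epsilon> where "\<epsilon> = min (c/2) (c * e / (4 * (K + 1)))"
  define \<eta> where "\<eta> = c * e / 4"
  have p1: "c * e / (4 * (K + 1)) > 0" using c e K by (intro divide_pos_pos mult_pos_pos) auto
  have \<epsilon>: "\<epsilon> > 0" "\<epsilon> \<le> c/2" "\<epsilon> \<le> c * e / (4 * (K + 1))"
    unfolding \<epsilon>_def using c p1 by (auto simp only: min.cobounded1 min.cobounded2 min_less_iff_conj)
  have \<eta>: "\<eta> > 0" using c e by (simp add: \<eta>_def)
  obtain \<delta> where \<delta>: "\<delta> > 0" and fdd: "\<And>y. norm (y - w t) < \<delta> \<Longrightarrow> norm (f y - f (w t) - J (y - w t)) \<le> \<epsilon> * norm (y - w t)"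
    using fd \<epsilon>(1) unfolding has_derivative_at_alt by blast
  have "\<forall>\<^sub>F s in at t within S. dist (w s) (w t) < \<delta>" using wc \<delta> unfolding tendsto_iff by blast
  then obtain d2 where d2: "d2 > 0" and wcd: "\<And>s. s \<in> S \<Longrightarrow> s \<noteq> t \<Longrightarrow> dist s t < d2 \<Longrightarrow> dist (w s) (w t) < \<delta>"
    unfolding eventually_at by blast
  obtain d1 where d1: "d1 > 0" and rdd: "\<And>s. s \<in> S \<Longrightarrow> norm (s - t) < d1 \<Longrightarrow> norm (r s - r t - (s - t) *\<^sub>R J u) \<le> \<eta> * norm (s - t)"
    using rd \<eta> unfolding has_vector_derivative_def has_derivative_within_alt by blast
  show "\<exists>d>0. \<forall>s\<in>S. norm (s - t) < d \<longrightarrow> norm (w s - w t - (s - t) *\<^sub>R u) \<le> e * norm (s - t)"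
  proof (intro exI[of _ "min d1 d2"] conjI ballI impI)
    show "min d1 d2 > 0" using d1 d2 by simp
    fix s assume s: "s \<in> S" and sd: "norm (s - t) < min d1 d2"
    show "norm (w s - w t - (s - t) *\<^sub>R u) \<le> e * norm (s - t)"
    proof (cases "s = t")
      case True then show ?thesis by simp
    next
      case False
      define \<Delta> where "\<Delta> = w s - w t"
      define h where "h = s - t"
      have nD: "norm \<Delta> < \<delta>" using wcd[OF s False] sd by (simp add: \<Delta>_def dist_norm)
      have A: "norm (f (w s) - f (w t) - J \<Delta>) \<le> \<epsilon> * norm \<Delta>"
        using fdd[of "w s"] nD unfolding \<Delta>_def by simp
      have B: "norm (r s - r t - h *\<^sub>R J u) \<le> \<eta> * norm h"
        using rdd[OF s] sd unfolding h_def by simp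
      have JJ: "J (\<Delta> - h *\<^sub>R u) = (r s - r t - h *\<^sub>R J u) - (f (w s) - f (w t) - J \<Delta>)"
        using fw[OF s] fw[OF t] blJ by (simp add: linear_simps algebra_simps)
      have "c * norm (\<Delta> - h *\<^sub>R u) \<le> norm (J (\<Delta> - h *\<^sub>R u))" by (rule Jb)
      also have "\<dots> \<le> norm (r s - r t - h *\<^sub>R J u) + norm (f (w s) - f (w t) - J \<Delta>)"
        unfolding JJ by (rule norm_triangle_ineq4)
      also have "\<dots> \<le> \<eta> * norm h + \<epsilon> * norm \<Delta>" using A B by simp
      also have "\<epsilon> * norm \<Delta> \<le> \<epsilon> * (norm (\<Delta> - h *\<^sub>R u) + norm h * K)"
      proof -
        have "norm \<Delta> \<le> norm (\<Delta> - h *\<^sub>R u) + norm (h *\<^sub>R u)"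
          using norm_triangle_ineq[of "\<Delta> - h *\<^sub>R u" "h *\<^sub>R u"] by simp
        then show ?thesis using \<epsilon>(1) by (intro mult_left_mono) (auto simp: K_def)
      qed
      finally have C: "c * norm (\<Delta> - h *\<^sub>R u) \<le> \<eta> * norm h + \<epsilon> * norm (\<Delta> - h *\<^sub>R u) + \<epsilon> * K * norm h"
        by (simp add: algebra_simps)
      have "\<epsilon> * norm (\<Delta> - h *\<^sub>R u) \<le> c/2 * norm (\<Delta> - h *\<^sub>R u)"
        using \<epsilon>(2) by (intro mult_right_mono) auto
      with C have D: "c/2 * norm (\<Delta> - h *\<^sub>R u) \<le> (\<eta> + \<epsilon> * K) * norm h"
        by (simp add: algebra_simps)
      have "\<epsilon> * K \<le> c * e / (4 * (K + 1)) * K" using \<epsilon>(3) K by (intro mult_right_mono) auto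
      also have "\<dots> \<le> c * e / 4"
      proof -
        have "c * e / (4 * (K + 1)) * K = (c * e / 4) * (K / (K + 1))" by (simp add: field_simps)
        also have "\<dots> \<le> (c * e / 4) * 1" using K c e by (intro mult_left_mono) auto
        finally show ?thesis by simp
      qed
      finally have E: "\<eta> + \<epsilon> * K \<le> c/2 * e" unfolding \<eta>_def by simp
      have "c/2 * norm (\<Delta> - h *\<^sub>R u) \<le> c/2 * (e * norm h)"
        using D E by (smt (verit) mult.assoc mult_right_mono norm_ge_zero)
      then have "norm (\<Delta> - h *\<^sub>R u) \<le> e * norm h" using c by simp
      then show ?thesis unfolding \<Delta>_def h_def .
    qed
  qed
qed

lemma unit_unitrot: assumes "unit_dq x" shows "unitrot (fst x)"
proof -
  from assms obtain r p \<phi> nn where h: "0 \<le> \<phi>" "\<phi> < 2*pi" "norm nn = 1"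
    "r = cos (\<phi>/2) *\<^sub>R qone + sin (\<phi>/2) *\<^sub>R pure nn" "x = (r, (1/2) *\<^sub>R hmul (pure p) r)"
    unfolding unit_dq_def by blast
  then show ?thesis unfolding unitrot_def by (intro exI[of _ \<phi>] exI[of _ nn]) simp
qed

lemma unitrot_basic: assumes "unitrot r" shows "qexp (qlog r) = r" "norm (qlog r) < pi"
proof -
  obtain \<phi> nn where "0 \<le> \<phi>" "\<phi> < 2*pi" "norm nn = 1" "r $ 1 = cos (\<phi>/2)" "im r = sin (\<phi>/2) *\<^sub>R nn"
    "qlog r = (\<phi>/2) *\<^sub>R nn" "qexp (qlog r) = r" "norm (qlog r) = \<phi>/2" "arccos (r $ 1) = \<phi>/2"
    "r = cos (\<phi>/2) *\<^sub>R qone + sin (\<phi>/2) *\<^sub>R pure nn"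
    by (rule unitrot_facts[OF assms])
  then show "qexp (qlog r) = r" "norm (qlog r) < pi" by auto
qed

lemma rot_deriv:
  fixes x :: "real \<Rightarrow> dq"
  assumes unit: "\<And>s. s \<ge> 0 \<Longrightarrow> unit_dq (x s)" and t: "t \<ge> 0"
    and der: "(x has_vector_derivative - Q8 (x t) (u, v)) (at t within {0..})"
  shows "((\<lambda>s. qlog (fst (x s))) has_vector_derivative - u) (at t within {0..})"
proof -
  define r where "r s = fst (x s)" for s
  have U: "unitrot (r s)" if "s \<in> {0..}" for s using unit_unitrot[OF unit] that unfolding r_def by simp
  define w0 where "w0 = qlog (r t)"
  have Ut: "unitrot (r t)" using U t by simp
  have w0pi: "norm w0 < pi" unfolding w0_def using unitrot_basic[OF Ut] by simp
  have fd: "(qexp has_derivative Jq w0) (at w0)" by (rule qexp_deriv)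
  have "(qexp has_derivative (\<lambda>h. jacobian qexp (at w0) *v h)) (at w0)"
    using jacobian_works fd differentiableI by blast
  then have Jeq: "Jq w0 = (\<lambda>h. Qmat (r t) *v h)"
    unfolding Qmat_def w0_def[symmetric] using has_derivative_unique[OF fd] by blast
  have blJ: "bounded_linear (Jq w0)" using fd by (rule has_derivative_bounded_linear)
  obtain c where c: "c > 0" and Jb: "\<And>d. norm (Jq w0 d) \<ge> c * norm d"
    using injective_imp_isometric[of UNIV "Jq w0"] blJ Jq_inj[OF w0pi] by auto
  have rd: "(r has_vector_derivative Jq w0 (- u)) (at t within {0..})"
  proof -
    have "(r has_vector_derivative fst (- Q8 (x t) (u, v))) (at t within {0..})"
      unfolding r_def using bounded_linear.has_vector_derivative[OF bounded_linear_fst der] by simp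
    moreover have "fst (- Q8 (x t) (u, v)) = Jq w0 (- u)"
    proof -
      have "Qmat (r t) *v (- u) = - (Qmat (r t) *v u)"
        using linear_neg[OF matrix_vector_mul_linear[where A = "Qmat (r t)"]] by simp
      then show ?thesis unfolding Jeq Q8_def Let_def dq_rot_def r_def by simp
    qed
    ultimately show ?thesis by simp
  qed
  have rc: "(r \<longlongrightarrow> r t) (at t within {0..})"
    using has_vector_derivative_continuous[OF rd] by (simp add: continuous_within)
  have wc: "((\<lambda>s. qlog (r s)) \<longlongrightarrow> qlog (r t)) (at t within {0..})"
    using qlog_tendsto[OF rc U] t by simp
  have fw: "qexp (qlog (r s)) = r s" if "s \<in> {0..}" for s
    using unitrot_basic[OF U[OF that]] by simp
  have "((\<lambda>s. qlog (r s)) has_vector_derivative - u) (at t within {0..})"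
    by (rule inv_deriv[OF _ Jb c wc fw _ rd]) (use fd t in \<open>auto simp: w0_def\<close>)
  then show ?thesis unfolding r_def .
qed



lemma comp_lemma:
  fixes f :: "real \<Rightarrow> real"
  assumes ab: "a \<le> b" and D: "D \<ge> 0" and c: "c \<ge> 0"
    and cont: "continuous_on {a..b} f"
    and der: "\<And>t. a < t \<Longrightarrow> t < b \<Longrightarrow> \<exists>f'. (f has_real_derivative f') (at t) \<and> f' \<ge> - D * f t + c"
  shows "f b \<ge> exp (- D * (b - a)) * (f a + c * (b - a))"
proof -
  define G where "G t = exp (D * (t - a)) * f t - c * (t - a)" for t
  have "G a \<le> G b"
  proof (rule DERIV_nonneg_imp_increasing_open[OF ab])
    fix t assume t: "a < t" "t < b"
    obtain f' where f': "(f has_real_derivative f') (at t)" "f' \<ge> - D * f t + c"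
      using der[OF t] by blast
    have dG: "(G has_real_derivative (exp (D * (t - a)) * D * f t + exp (D * (t - a)) * f' - c)) (at t)"
      unfolding G_def
      by (auto intro!: derivative_eq_intros f'(1))
    have e1: "exp (D * (t - a)) \<ge> 1" using D t by simp
    have "exp (D * (t - a)) * (D * f t + f') \<ge> exp (D * (t - a)) * c"
      using f'(2) by (intro mult_left_mono) auto
    moreover have "exp (D * (t - a)) * c \<ge> c" using e1 c
      using mult_right_mono[OF e1 c] by simp
    ultimately have "exp (D * (t - a)) * D * f t + exp (D * (t - a)) * f' - c \<ge> 0"
      by (simp add: algebra_simps)
    then show "\<exists>y. (G has_real_derivative y) (at t) \<and> 0 \<le> y" using dG by blast
  next
    show "continuous_on {a..b} G" unfolding G_def
      by (intro continuous_intros cont)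
  qed
  then have "exp (D * (b - a)) * f b \<ge> f a + c * (b - a)" unfolding G_def by simp
  then have "exp (- D * (b - a)) * (exp (D * (b - a)) * f b) \<ge> exp (- D * (b - a)) * (f a + c * (b - a))"
    by (intro mult_left_mono) auto
  moreover have "exp (- D * (b - a)) * (exp (D * (b - a)) * f b) = f b"
    by (simp add: mult.assoc[symmetric] exp_add[symmetric])
  ultimately show ?thesis by linarith
qed

locale cons_sys =
  fixes n :: nat and a :: "nat \<Rightarrow> nat \<Rightarrow> real" and z :: "nat \<Rightarrow> real \<Rightarrow> real"
  assumes nonneg: "\<And>i j. i < n \<Longrightarrow> j < n \<Longrightarrow> a i j \<ge> 0"
    and deriv: "\<And>i t. i < n \<Longrightarrow> t \<ge> 0 \<Longrightarrow>
       (z i has_real_derivative - (\<Sum>j<n. a i j * (z i t - z j t))) (at t within {0..})"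
begin

lemma deriv_at: "i < n \<Longrightarrow> t > 0 \<Longrightarrow>
       (z i has_real_derivative - (\<Sum>j<n. a i j * (z i t - z j t))) (at t)"
proof -
  assume i: "i < n" and t: "t > 0"
  have "(z i has_real_derivative - (\<Sum>j<n. a i j * (z i t - z j t))) (at t within {0<..})"
    using t by (intro has_field_derivative_subset[OF deriv[OF i, of t]]) auto
  moreover have e: "at t within {0<..} = at t" by (rule at_within_open) (use t in auto)
  ultimately show ?thesis by simp
qed

lemma cont: "i < n \<Longrightarrow> continuous_on {0..} (z i)"
  unfolding continuous_on_eq_continuous_within
proof
  fix t :: real assume i: "i < n" and "t \<in> {0..}"
  then have "t \<ge> 0" by simp
  from DERIV_continuous[OF deriv[OF i this]] show "continuous (at t within {0..}) (z i)" .
qed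

lemma neg: "cons_sys n a (\<lambda>i t. - z i t)"
proof
  fix i j assume "i < n" "j < n" then show "a i j \<ge> 0" by (rule nonneg)
next
  fix i t assume i: "i < n" and t: "(0::real) \<le> t"
  have "((\<lambda>t. - z i t) has_real_derivative - (- (\<Sum>j<n. a i j * (z i t - z j t)))) (at t within {0..})"
    using deriv[OF i t] by (rule DERIV_minus)
  moreover have "- (- (\<Sum>j<n. a i j * (z i t - z j t))) = - (\<Sum>j<n. a i j * (- z i t - - z j t))"
  proof -
    have "\<And>j. a i j * (- z i t - - z j t) = - (a i j * (z i t - z j t))" by (simp add: algebra_simps)
    then show ?thesis by (simp only: sum_negf minus_minus)
  qed
  ultimately show "((\<lambda>t. - z i t) has_real_derivative - (\<Sum>j<n. a i j * (- z i t - - z j t))) (at t within {0..})"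
    by simp
qed

lemma lower_inv:
  assumes s: "s \<ge> 0" and low: "\<And>i. i < n \<Longrightarrow> z i s \<ge> m" and T: "T \<ge> s" and i: "i < n"
  shows "z i T \<ge> m"
proof (rule ccontr)
  assume "\<not> z i T \<ge> m"
  then have zT: "z i T < m" by simp
  define \<epsilon> where "\<epsilon> = (m - z i T) / 2 * exp (- (T - s))"
  have \<epsilon>: "\<epsilon> > 0" using zT by (simp add: \<epsilon>_def)
  define g where "g j t = z j t - m + \<epsilon> * exp (t - s)" for j t
  have gT: "g i T < 0"
  proof -
    have "\<epsilon> * exp (T - s) = (m - z i T) / 2"
    proof -
      have "exp (- (T - s)) * exp (T - s) = 1" by (metis exp_minus_inverse mult.commute)
      then show ?thesis unfolding \<epsilon>_def by (metis mult.assoc mult.right_neutral)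
    qed
    then show ?thesis using zT by (simp add: g_def)
  qed
  define S where "S = (\<Union>j<n. {s..T} \<inter> g j -` {..0})"
  have Sne: "T \<in> S" using gT i T unfolding S_def by force
  have contg: "continuous_on {s..T} (g j)" if "j < n" for j
    unfolding g_def
    by (intro continuous_intros continuous_on_subset[OF cont[OF that]]) (use s in auto)
  have "closed S" unfolding S_def
  proof (intro closed_UN ballI)
    fix j assume "j \<in> {..<n}"
    then show "closed ({s..T} \<inter> g j -` {..0})"
      using continuous_closed_preimage[OF contg, of j "{..0}"] by simp
  qed simp
  moreover have "bounded S" unfolding S_def by (rule bounded_subset[of "{s..T}"]) (auto simp del: vimage_def)
  ultimately have "compact S" by (simp add: compact_eq_bounded_closed)
  then obtain \<tau> where \<tau>S: "\<tau> \<in> S" and \<tau>min: "\<And>t. t \<in> S \<Longrightarrow> \<tau> \<le> t"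
    using compact_attains_inf[of S] Sne by blast
  have \<tau>1: "s \<le> \<tau>" "\<tau> \<le> T" and ex: "\<exists>j<n. g j \<tau> \<le> 0" using \<tau>S by (auto simp: S_def)
  have finne: "finite ((\<lambda>j. g j \<tau>) ` {..<n})" "(\<lambda>j. g j \<tau>) ` {..<n} \<noteq> {}" using i by auto
  obtain i0 where i0: "i0 < n" "g i0 \<tau> = Min ((\<lambda>j. g j \<tau>) ` {..<n})"
    using Min_in[OF finne] by auto
  have i0min: "g i0 \<tau> \<le> g j \<tau>" if "j < n" for j
    using i0(2) finne that by auto
  have gi0: "g i0 \<tau> \<le> 0" using ex i0min by force
  have "\<tau> \<noteq> s"
  proof
    assume "\<tau> = s"
    then have "g i0 \<tau> = z i0 s - m + \<epsilon>" by (simp add: g_def)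
    also have "\<dots> > 0" using low[OF i0(1)] \<epsilon> by simp
    finally show False using gi0 by simp
  qed
  with \<tau>1 have \<tau>s: "\<tau> > s" by simp
  then have \<tau>0: "\<tau> > 0" using s by simp
  have dz: "(z i0 has_real_derivative - (\<Sum>j<n. a i0 j * (z i0 \<tau> - z j \<tau>))) (at \<tau>)"
    using deriv_at[OF i0(1) \<tau>0] .
  have dzpos: "- (\<Sum>j<n. a i0 j * (z i0 \<tau> - z j \<tau>)) \<ge> 0"
  proof -
    have "(\<Sum>j<n. a i0 j * (z i0 \<tau> - z j \<tau>)) \<le> (\<Sum>j<n. 0)"
    proof (rule sum_mono)
      fix j assume "j \<in> {..<n}"
      then have j: "j < n" by simp
      have "z i0 \<tau> - z j \<tau> \<le> 0" using i0min[OF j] by (simp add: g_def)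
      then show "a i0 j * (z i0 \<tau> - z j \<tau>) \<le> 0"
        using nonneg[OF i0(1) j] by (simp add: mult_nonneg_nonpos)
    qed
    then show ?thesis by simp
  qed
  have dg: "(g i0 has_real_derivative (- (\<Sum>j<n. a i0 j * (z i0 \<tau> - z j \<tau>)) + \<epsilon> * exp (\<tau> - s))) (at \<tau>)"
    unfolding g_def by (auto intro!: derivative_eq_intros dz)
  have "0 < - (\<Sum>j<n. a i0 j * (z i0 \<tau> - z j \<tau>)) + \<epsilon> * exp (\<tau> - s)"
    using dzpos \<epsilon> by (simp add: add_nonneg_pos) (smt (verit) exp_gt_zero mult_pos_pos)
  from DERIV_pos_inc_left[OF dg this] obtain d where d: "d > 0"
    and dd: "\<And>h. h > 0 \<Longrightarrow> h < d \<Longrightarrow> g i0 (\<tau> - h) < g i0 \<tau>" by blast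
  define h where "h = min (d / 2) (\<tau> - s)"
  have h: "h > 0" "h < d" "\<tau> - h \<ge> s" using d \<tau>s by (auto simp: h_def)
  have "g i0 (\<tau> - h) < 0" using dd[OF h(1,2)] gi0 by simp
  then have "\<tau> - h \<in> S" using h \<tau>1 i0(1) unfolding S_def by (intro UN_I[of i0]) auto
  have "\<tau> \<le> \<tau> - h" by (rule \<tau>min) fact
  then show False using h(1) by linarith
qed

lemma upper_inv:
  assumes s: "s \<ge> 0" and up: "\<And>i. i < n \<Longrightarrow> z i s \<le> M" and T: "T \<ge> s" and i: "i < n"
  shows "z i T \<le> M"
proof -
  interpret ng: cons_sys n a "\<lambda>i t. - z i t" by (rule neg)
  have "- z i T \<ge> - M" using ng.lower_inv[OF s _ T i, of "- M"] up by auto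
  then show ?thesis by simp
qed


lemma deriv_lower:
  assumes s: "s \<ge> 0" and low: "\<And>j. j < n \<Longrightarrow> z j s \<ge> m" and t: "t \<ge> s"
    and i: "i < n" and p: "p < n"
  shows "- (\<Sum>j<n. a i j * (z i t - z j t)) \<ge> - (\<Sum>i'<n. \<Sum>j<n. a i' j) * (z i t - m) + a i p * (z p t - m)"
proof -
  have zl: "\<And>j. j < n \<Longrightarrow> z j t - m \<ge> 0" using lower_inv[OF s low t] by simp
  have "(\<Sum>j<n. a i j) * (z i t - m) - (\<Sum>j<n. a i j * (z j t - m)) = (\<Sum>j<n. a i j * (z i t - m) - a i j * (z j t - m))"
    by (simp add: sum_distrib_right sum_subtractf)
  also have "\<dots> = (\<Sum>j<n. a i j * (z i t - z j t))"
    by (rule sum.cong) (simp_all add: algebra_simps)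
  finally have split: "(\<Sum>j<n. a i j * (z i t - z j t)) = (\<Sum>j<n. a i j) * (z i t - m) - (\<Sum>j<n. a i j * (z j t - m))" by simp
  have "(\<Sum>j<n. a i j) \<le> (\<Sum>i'<n. \<Sum>j<n. a i' j)"
    using i by (intro member_le_sum) (auto intro!: sum_nonneg nonneg)
  then have A: "(\<Sum>j<n. a i j) * (z i t - m) \<le> (\<Sum>i'<n. \<Sum>j<n. a i' j) * (z i t - m)"
    using zl[OF i] by (rule mult_right_mono)
  have B: "a i p * (z p t - m) \<le> (\<Sum>j<n. a i j * (z j t - m))"
    using p by (intro member_le_sum[of p "{..<n}" "\<lambda>j. a i j * (z j t - m)"]) (auto intro!: mult_nonneg_nonneg nonneg i zl)
  show ?thesis unfolding split using A B by linarith
qed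

end

definition dep :: "(nat \<Rightarrow> nat) \<Rightarrow> nat \<Rightarrow> nat \<Rightarrow> nat" where
  "dep par k i = (LEAST m. (par ^^ m) i = k)"

definition Dg :: "nat \<Rightarrow> (nat \<Rightarrow> nat \<Rightarrow> real) \<Rightarrow> real" where
  "Dg n a = (\<Sum>i'<n. \<Sum>j<n. a i' j)"

definition alp :: "nat \<Rightarrow> (nat \<Rightarrow> nat \<Rightarrow> real) \<Rightarrow> (nat \<Rightarrow> nat) \<Rightarrow> nat \<Rightarrow> real" where
  "alp n a par k = Min (insert 1 ((\<lambda>i. a i (par i)) ` {i. i < n \<and> i \<noteq> k}))"

definition Hx :: "nat \<Rightarrow> (nat \<Rightarrow> nat) \<Rightarrow> nat \<Rightarrow> real" where
  "Hx n par k = real (Max (dep par k ` {..<n})) + 1"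

definition gam :: "nat \<Rightarrow> (nat \<Rightarrow> nat \<Rightarrow> real) \<Rightarrow> (nat \<Rightarrow> nat) \<Rightarrow> nat \<Rightarrow> nat \<Rightarrow> real" where
  "gam n a par k l = exp (- Dg n a * Hx n par k) / 2 * (exp (- Dg n a * Hx n par k) * alp n a par k) ^ l"

definition is_tree :: "nat \<Rightarrow> (nat \<Rightarrow> nat \<Rightarrow> real) \<Rightarrow> (nat \<Rightarrow> nat) \<Rightarrow> nat \<Rightarrow> bool" where
  "is_tree n a par k \<longleftrightarrow> k < n \<and> (\<forall>i<n. i \<noteq> k \<longrightarrow> par i < n \<and> a i (par i) > 0 \<and> (\<exists>m. (par ^^ m) i = k))"

lemma dep_k: "dep par k k = 0" unfolding dep_def by simp

lemma dep_spec: assumes "is_tree n a par k" "i < n" shows "(par ^^ dep par k i) i = k"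
proof (cases "i = k")
  case True then show ?thesis by (simp add: dep_k)
next
  case False
  then obtain m where "(par ^^ m) i = k" using assms unfolding is_tree_def by blast
  then show ?thesis unfolding dep_def by (rule LeastI)
qed

lemma dep_pos: assumes "is_tree n a par k" "i < n" "i \<noteq> k" shows "dep par k i > 0"
  using dep_spec[OF assms(1,2)] assms(3) by (cases "dep par k i") auto

lemma dep_par: assumes "is_tree n a par k" "i < n" "i \<noteq> k"
  shows "dep par k (par i) \<le> dep par k i - 1"
proof -
  obtain d where d: "dep par k i = Suc d" using dep_pos[OF assms] by (cases "dep par k i") auto
  have "(par ^^ Suc d) i = k" using dep_spec[OF assms(1,2)] d by simp
  then have "(par ^^ d) (par i) = k" by (simp add: funpow_Suc_right del: funpow.simps)
  then have "dep par k (par i) \<le> d" unfolding dep_def by (rule Least_le)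
  then show ?thesis using d by simp
qed

lemma Dg_nonneg: assumes "\<And>i j. i < n \<Longrightarrow> j < n \<Longrightarrow> a i j \<ge> 0" shows "Dg n a \<ge> 0"
  unfolding Dg_def by (auto intro!: sum_nonneg assms)

lemma alp_props: assumes "is_tree n a par k"
  shows "alp n a par k > 0" "alp n a par k \<le> 1" "\<And>i. i < n \<Longrightarrow> i \<noteq> k \<Longrightarrow> alp n a par k \<le> a i (par i)"
proof -
  have fin: "finite (insert 1 ((\<lambda>i. a i (par i)) ` {i. i < n \<and> i \<noteq> k}))" by auto
  show "alp n a par k > 0" unfolding alp_def
    using assms fin by (subst Min_gr_iff) (auto simp: is_tree_def)
  show "alp n a par k \<le> 1" unfolding alp_def using fin by (intro Min_le) auto
  show "\<And>i. i < n \<Longrightarrow> i \<noteq> k \<Longrightarrow> alp n a par k \<le> a i (par i)" unfolding alp_def using fin by (intro Min_le) auto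
qed

lemma Hx_ge: "i < n \<Longrightarrow> real (dep par k i) + 1 \<le> Hx n par k"
  unfolding Hx_def by simp

lemma Hx_pos: "Hx n par k \<ge> 1" unfolding Hx_def by simp

context cons_sys begin

lemma phase_low:
  assumes tree: "is_tree n a par k" and s: "s \<ge> 0" and low: "\<And>j. j < n \<Longrightarrow> z j s \<ge> m"
    and mM: "m \<le> M" and root: "z k s - m \<ge> (M - m) / 2" and i: "i < n"
  shows "z i (s + Hx n par k) \<ge> m + gam n a par k (Max (dep par k ` {..<n})) * (M - m)"
proof -
  define D where "D = Dg n a"
  define H where "H = Hx n par k"
  define E where "E = exp (- D * H)"
  define \<alpha> where "\<alpha> = alp n a par k"
  have D0: "D \<ge> 0" unfolding D_def by (rule Dg_nonneg) (rule nonneg)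
  have H1: "H \<ge> 1" unfolding H_def by (rule Hx_pos)
  have \<alpha>: "\<alpha> > 0" "\<alpha> \<le> 1" "\<And>i. i < n \<Longrightarrow> i \<noteq> k \<Longrightarrow> \<alpha> \<le> a i (par i)"
    using alp_props[OF tree] unfolding \<alpha>_def by auto
  have E: "E > 0" "E \<le> 1" unfolding E_def using D0 H1 by auto
  have gam_eq: "gam n a par k l = E / 2 * (E * \<alpha>) ^ l" for l
    unfolding gam_def E_def D_def H_def \<alpha>_def ..
  have gpos: "gam n a par k l \<ge> 0" for l unfolding gam_eq using E \<alpha> by auto
  have gdec: "gam n a par k (Suc l) \<le> gam n a par k l" for l
  proof -
    have "(E * \<alpha>) ^ Suc l \<le> (E * \<alpha>) ^ l"
      using E \<alpha> by (intro power_decreasing) (auto simp: mult_le_one)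
    then show ?thesis unfolding gam_eq using E by (intro mult_left_mono) auto
  qed
  have Delta: "M - m \<ge> 0" using mM by simp
  have lowall: "\<And>j t. j < n \<Longrightarrow> t \<ge> s \<Longrightarrow> z j t - m \<ge> 0" using lower_inv[OF s low] by simp
  have kn: "k < n" using tree by (simp add: is_tree_def)
  have Eb: "exp (- D * x) \<ge> E" if "x \<le> H" for x
    unfolding E_def using D0 that by (simp add: mult_left_mono)
  have claim: "\<forall>i<n. dep par k i \<le> l \<longrightarrow> (\<forall>t. s + real l \<le> t \<and> t \<le> s + H \<longrightarrow> z i t - m \<ge> gam n a par k l * (M - m))" for l
  proof (induction l)
    case 0
    show ?case
    proof (intro allI impI)
      fix i t assume i: "i < n" and d0: "dep par k i \<le> 0" and t: "s + real 0 \<le> t \<and> t \<le> s + H"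
      have ik: "i = k" using dep_pos[OF tree i] d0 by (cases "i = k") auto
      have "z k t - m \<ge> exp (- D * (t - s)) * ((z k s - m) + 0 * (t - s))"
      proof (rule comp_lemma[where f = "\<lambda>t. z k t - m"])
        show "s \<le> t" using t by simp
        show "D \<ge> 0" by fact
        show "(0::real) \<le> 0" by simp
        show "continuous_on {s..t} (\<lambda>t. z k t - m)"
          by (intro continuous_intros continuous_on_subset[OF cont[OF kn]]) (use s in auto)
      next
        fix \<tau> assume \<tau>: "s < \<tau>" "\<tau> < t"
        have "((\<lambda>t. z k t - m) has_real_derivative - (\<Sum>j<n. a k j * (z k \<tau> - z j \<tau>))) (at \<tau>)"
          using deriv_at[OF kn, of \<tau>] \<tau> s by (auto intro!: derivative_eq_intros)
        moreover have "- (\<Sum>j<n. a k j * (z k \<tau> - z j \<tau>)) \<ge> - D * (z k \<tau> - m) + 0"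
          using deriv_lower[OF s low _ kn kn, of \<tau>] \<tau> lowall[OF kn, of \<tau>] nonneg[OF kn kn] unfolding D_def Dg_def
          by (smt (verit) mult_nonneg_nonneg)
        ultimately show "\<exists>f'. ((\<lambda>t. z k t - m) has_real_derivative f') (at \<tau>) \<and> f' \<ge> - D * (z k \<tau> - m) + 0"
          by blast
      qed
      then have "z k t - m \<ge> exp (- D * (t - s)) * (z k s - m)" by simp
      moreover have "exp (- D * (t - s)) * (z k s - m) \<ge> E * ((M - m) / 2)"
        using Eb[of "t - s"] t root E Delta by (intro mult_mono) auto
      moreover have "gam n a par k 0 * (M - m) = E * ((M - m) / 2)" unfolding gam_eq by simp
      ultimately have "z k t - m \<ge> gam n a par k 0 * (M - m)" by linarith
      then show "z i t - m \<ge> gam n a par k 0 * (M - m)" using ik by simp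
    qed
  next
    case (Suc l)
    show ?case
    proof (intro allI impI)
      fix i t assume i: "i < n" and dl: "dep par k i \<le> Suc l" and t: "s + real (Suc l) \<le> t \<and> t \<le> s + H"
      show "z i t - m \<ge> gam n a par k (Suc l) * (M - m)"
      proof (cases "dep par k i \<le> l")
        case True
        then have "z i t - m \<ge> gam n a par k l * (M - m)" using Suc.IH i t by auto
        moreover have "gam n a par k l * (M - m) \<ge> gam n a par k (Suc l) * (M - m)"
          using gdec Delta by (intro mult_right_mono) auto
        ultimately show ?thesis by simp
      next
        case False
        then have dSl: "dep par k i = Suc l" using dl by simp
        then have ik: "i \<noteq> k" using dep_k[of par k] by auto
        define p where "p = par i"
        have pn: "p < n" and ap: "a i p \<ge> \<alpha>" using tree i ik \<alpha>(3)[OF i ik] unfolding is_tree_def p_def by auto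
        have dp: "dep par k p \<le> l" using dep_par[OF tree i ik] dSl unfolding p_def by simp
        define c where "c = \<alpha> * (gam n a par k l * (M - m))"
        have c0: "c \<ge> 0" unfolding c_def using \<alpha> gpos Delta by auto
        have sl0: "s + real l \<ge> 0" using s by simp
        have "z i t - m \<ge> exp (- D * (t - (s + real l))) * ((z i (s + real l) - m) + c * (t - (s + real l)))"
        proof (rule comp_lemma[where f = "\<lambda>t. z i t - m"])
          show "s + real l \<le> t" using t by simp
          show "D \<ge> 0" by fact
          show "c \<ge> 0" by fact
          show "continuous_on {s + real l..t} (\<lambda>t. z i t - m)"
            by (intro continuous_intros continuous_on_subset[OF cont[OF i]]) (use s in auto)
        next
          fix \<tau> assume \<tau>: "s + real l < \<tau>" "\<tau> < t"
          have "((\<lambda>t. z i t - m) has_real_derivative - (\<Sum>j<n. a i j * (z i \<tau> - z j \<tau>))) (at \<tau>)"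
            using deriv_at[OF i, of \<tau>] \<tau> s by (auto intro!: derivative_eq_intros)
          moreover have "- (\<Sum>j<n. a i j * (z i \<tau> - z j \<tau>)) \<ge> - D * (z i \<tau> - m) + c"
          proof -
            have "z p \<tau> - m \<ge> gam n a par k l * (M - m)" using Suc.IH pn dp \<tau> t by auto
            then have "a i p * (z p \<tau> - m) \<ge> \<alpha> * (gam n a par k l * (M - m))"
              using ap \<alpha> gpos Delta by (intro mult_mono) auto
            then show ?thesis
              using deriv_lower[OF s low _ i pn, of \<tau>] \<tau> unfolding D_def Dg_def c_def by simp
          qed
          ultimately show "\<exists>f'. ((\<lambda>t. z i t - m) has_real_derivative f') (at \<tau>) \<and> f' \<ge> - D * (z i \<tau> - m) + c"
            by blast
        qed
        moreover have "exp (- D * (t - (s + real l))) * ((z i (s + real l) - m) + c * (t - (s + real l))) \<ge> E * c"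
        proof -
          have "(z i (s + real l) - m) + c * (t - (s + real l)) \<ge> c"
          proof -
            have "c * 1 \<le> c * (t - (s + real l))" using t c0 by (intro mult_left_mono) auto
            then show ?thesis using lowall[OF i, of "s + real l"] by simp
          qed
          then show ?thesis using Eb[of "t - (s + real l)"] t E c0 by (intro mult_mono) auto
        qed
        moreover have "E * c = gam n a par k (Suc l) * (M - m)" unfolding c_def gam_eq by (simp add: algebra_simps)
        ultimately show ?thesis by simp
      qed
    qed
  qed
  have "dep par k i \<le> Max (dep par k ` {..<n})" using i by (intro Max_ge) auto
  moreover have "s + real (Max (dep par k ` {..<n})) \<le> s + H" unfolding H_def Hx_def by simp
  ultimately have "z i (s + H) - m \<ge> gam n a par k (Max (dep par k ` {..<n})) * (M - m)"
    using claim i by auto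
  then show ?thesis unfolding H_def by simp
qed


lemma gam_props: assumes tree: "is_tree n a par k"
  shows "gam n a par k l > 0" "gam n a par k l \<le> 1/2"
proof -
  define E where "E = exp (- Dg n a * Hx n par k)"
  have D0: "Dg n a \<ge> 0" by (rule Dg_nonneg) (rule nonneg)
  have E: "E > 0" "E \<le> 1" unfolding E_def using D0 Hx_pos[of n par k] by auto
  have \<alpha>: "alp n a par k > 0" "alp n a par k \<le> 1" using alp_props[OF tree] by auto
  have eq: "gam n a par k l = E / 2 * (E * alp n a par k) ^ l" unfolding gam_def E_def ..
  show "gam n a par k l > 0" unfolding eq using E \<alpha> by auto
  have "(E * alp n a par k) ^ l \<le> 1" using E \<alpha> by (intro power_le_one) (auto simp: mult_le_one)
  then have "E / 2 * (E * alp n a par k) ^ l \<le> 1/2 * 1" using E \<alpha> by (intro mult_mono) auto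
  then show "gam n a par k l \<le> 1/2" unfolding eq by simp
qed

lemma phase:
  assumes tree: "is_tree n a par k" and s: "s \<ge> 0"
    and bnd: "\<And>j. j < n \<Longrightarrow> m \<le> z j s \<and> z j s \<le> M"
  shows "\<exists>m' M'. M' - m' \<le> (1 - gam n a par k (Max (dep par k ` {..<n}))) * (M - m) \<and>
     (\<forall>j<n. m' \<le> z j (s + Hx n par k) \<and> z j (s + Hx n par k) \<le> M')"
proof -
  define g where "g = gam n a par k (Max (dep par k ` {..<n}))"
  define H where "H = Hx n par k"
  have kn: "k < n" using tree by (simp add: is_tree_def)
  have mM: "m \<le> M" using bnd[OF kn] by simp
  have Hs: "s + H \<ge> s" unfolding H_def using Hx_pos[of n par k] by simp
  show ?thesis
  proof (cases "z k s - m \<ge> (M - m) / 2")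
    case True
    have "\<forall>j<n. m + g * (M - m) \<le> z j (s + H) \<and> z j (s + H) \<le> M"
      using phase_low[OF tree s _ mM True] upper_inv[OF s _ Hs] bnd unfolding g_def H_def by blast
    then show ?thesis unfolding g_def[symmetric] H_def[symmetric]
      by (intro exI[of _ "m + g * (M - m)"] exI[of _ M]) (auto simp: algebra_simps)
  next
    case False
    interpret ng: cons_sys n a "\<lambda>i t. - z i t" by (rule neg)
    have r: "- z k s - (- M) \<ge> ((- m) - (- M)) / 2" using False by simp
    have "\<forall>j<n. - M + g * ((- m) - (- M)) \<le> - z j (s + H)"
      using ng.phase_low[OF tree s _ _ r] bnd mM unfolding g_def H_def by force
    moreover have "\<forall>j<n. m \<le> z j (s + H)" using lower_inv[OF s _ Hs] bnd by blast
    ultimately have "\<forall>j<n. m \<le> z j (s + H) \<and> z j (s + H) \<le> M - g * (M - m)" by force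
    then show ?thesis unfolding g_def[symmetric] H_def[symmetric]
      by (intro exI[of _ m] exI[of _ "M - g * (M - m)"]) (auto simp: algebra_simps)
  qed
qed

lemma converge:
  assumes tree: "is_tree n a par k" and i: "i < n" and j: "j < n"
  shows "((\<lambda>t. z i t - z j t) \<longlongrightarrow> 0) at_top"
proof -
  define g where "g = gam n a par k (Max (dep par k ` {..<n}))"
  define H where "H = Hx n par k"
  define \<rho> where "\<rho> = 1 - g"
  have g: "g > 0" "g \<le> 1/2" using gam_props[OF tree] unfolding g_def by auto
  have \<rho>: "\<rho> \<ge> 0" "\<rho> < 1" unfolding \<rho>_def using g by auto
  have H: "H \<ge> 1" unfolding H_def by (rule Hx_pos)
  define B where "B = (\<Sum>j<n. \<bar>z j 0\<bar>)"
  have b0: "- B \<le> z l 0 \<and> z l 0 \<le> B" if "l < n" for l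
  proof -
    have "\<bar>z l 0\<bar> \<le> B" unfolding B_def using that by (intro member_le_sum) auto
    then show ?thesis by auto
  qed
  have iter: "\<exists>m M. M - m \<le> \<rho> ^ N * (2 * B) \<and> (\<forall>l<n. m \<le> z l (real N * H) \<and> z l (real N * H) \<le> M)" for N
  proof (induction N)
    case 0 then show ?case using b0 by (intro exI[of _ "- B"] exI[of _ B]) auto
  next
    case (Suc N)
    then obtain m M where mM: "M - m \<le> \<rho> ^ N * (2 * B)" "\<forall>l<n. m \<le> z l (real N * H) \<and> z l (real N * H) \<le> M"
      by blast
    have sN: "real N * H \<ge> 0" using H by simp
    obtain m' M' where mM': "M' - m' \<le> \<rho> * (M - m)" "\<forall>l<n. m' \<le> z l (real N * H + H) \<and> z l (real N * H + H) \<le> M'"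
      using phase[OF tree sN, of m M] mM(2) unfolding \<rho>_def g_def H_def by blast
    have "\<rho> * (M - m) \<le> \<rho> * (\<rho> ^ N * (2 * B))" using mM(1) \<rho> by (intro mult_left_mono) auto
    then have "M' - m' \<le> \<rho> ^ Suc N * (2 * B)" using mM'(1) by simp
    moreover have "real (Suc N) * H = real N * H + H" by (simp add: algebra_simps)
    ultimately show ?case using mM'(2) by (intro exI[of _ m'] exI[of _ M']) auto
  qed
  show ?thesis unfolding tendsto_iff
  proof (intro allI impI)
    fix e :: real assume e: "e > 0"
    have "(\<lambda>N. \<rho> ^ N * (2 * B)) \<longlonglongrightarrow> 0 * (2 * B)"
      using \<rho> by (intro tendsto_mult LIMSEQ_power_zero) auto
    then have "eventually (\<lambda>N. dist (\<rho> ^ N * (2 * B)) 0 < e) sequentially"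
      using e unfolding tendsto_iff by auto
    then obtain N where N: "\<bar>\<rho> ^ N * (2 * B)\<bar> < e" unfolding eventually_sequentially by auto
    obtain m M where mM: "M - m \<le> \<rho> ^ N * (2 * B)" "\<forall>l<n. m \<le> z l (real N * H) \<and> z l (real N * H) \<le> M"
      using iter by blast
    have sN: "real N * H \<ge> 0" using H by simp
    show "eventually (\<lambda>t. dist (z i t - z j t) 0 < e) at_top"
      unfolding eventually_at_top_linorder
    proof (intro exI allI impI)
      fix t assume t: "t \<ge> real N * H"
      have "m \<le> z i t" "m \<le> z j t" using lower_inv[OF sN _ t] mM(2) i j by blast+
      moreover have "z i t \<le> M" "z j t \<le> M" using upper_inv[OF sN _ t] mM(2) i j by blast+
      ultimately show "dist (z i t - z j t) 0 < e" using mM(1) N by (simp add: dist_real_def)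
    qed
  qed
qed

end


definition edg :: "nat \<Rightarrow> (nat \<Rightarrow> nat \<Rightarrow> real) \<Rightarrow> nat \<Rightarrow> nat \<Rightarrow> bool" where
  "edg n a j i \<longleftrightarrow> i < n \<and> j < n \<and> a i j > 0"

abbreviation reach where "reach n a \<equiv> (edg n a)\<^sup>*\<^sup>*"

lemma tree_of_root:
  assumes b: "b < n" and all: "\<And>i. i < n \<Longrightarrow> reach n a b i"
  shows "has_directed_spanning_tree n a"
proof -
  define E where "E = edg n a"
  define dist where "dist i = (LEAST m. (E ^^ m) b i)" for i
  have dspec: "(E ^^ dist i) b i" if iN: "i < n" for i
  proof -
    obtain m where "(E ^^ m) b i" using rtranclp_imp_relpowp[OF all[OF iN]] unfolding E_def by blast
    then show ?thesis unfolding dist_def by (rule LeastI)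
  qed
  define par where "par i = (SOME j. E j i \<and> (E ^^ (dist i - 1)) b j)" for i
  have parspec: "E (par i) i \<and> (E ^^ (dist i - 1)) b (par i)" if iN: "i < n" "i \<noteq> b" for i
  proof -
    have "dist i \<noteq> 0" using dspec[OF iN(1)] iN(2) by (metis relpowp.simps(1))
    then obtain d where d: "dist i = Suc d" by (cases "dist i") auto
    then have "(E ^^ Suc d) b i" using dspec[OF iN(1)] by simp
    then obtain j where "(E ^^ d) b j" "E j i" by (rule relpowp_Suc_E)
    then have "\<exists>j. E j i \<and> (E ^^ (dist i - 1)) b j" using d by auto
    then show ?thesis unfolding par_def by (rule someI_ex)
  qed
  have distpar: "dist (par i) < dist i" if "i < n" "i \<noteq> b" for i
  proof -
    have "dist i \<noteq> 0" using dspec[OF that(1)] that(2) by (metis relpowp.simps(1))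
    moreover have "dist (par i) \<le> dist i - 1"
      using parspec[OF that] unfolding dist_def[of "par i"] by (intro Least_le) simp
    ultimately show ?thesis by simp
  qed
  have reachroot: "\<exists>m. (par ^^ m) i = b" if "i < n" for i
    using that
  proof (induction "dist i" arbitrary: i rule: less_induct)
    case less
    show ?case
    proof (cases "i = b")
      case True then show ?thesis by (intro exI[of _ 0]) simp
    next
      case False
      have pn: "par i < n" using parspec[OF less.prems False] unfolding E_def edg_def by simp
      obtain m where "(par ^^ m) (par i) = b" using less.hyps[OF distpar[OF less.prems False] pn] by blast
      then have "(par ^^ Suc m) i = b" by (simp add: funpow_Suc_right del: funpow.simps)
      then show ?thesis by blast
    qed
  qed
  have "\<forall>i<n. i \<noteq> b \<longrightarrow> par i < n \<and> 0 < a i (par i) \<and> (\<exists>m. (par ^^ m) i = b)"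
    using parspec reachroot unfolding E_def edg_def by auto
  then show ?thesis unfolding has_directed_spanning_tree_def using b by blast
qed


lemma reach_lt: "reach n a x y \<Longrightarrow> y = x \<or> y < n"
  by (induction rule: rtranclp_induct) (auto simp: edg_def)

lemma no_tree_kernel:
  assumes n: "n \<ge> 1" and nonneg: "\<And>i j. i < n \<Longrightarrow> j < n \<Longrightarrow> a i j \<ge> 0"
    and notree: "\<not> has_directed_spanning_tree n a"
  shows "\<exists>Y b d. b < n \<and> d < n \<and> Y b = (1::real) \<and> Y d = 0 \<and> (\<forall>i<n. (\<Sum>j<n. a i j * (Y i - Y j)) = 0)"
proof -
  have notall: "\<exists>i<n. \<not> reach n a b i" if "b < n" for b
    using tree_of_root[OF that] notree by blast
  define Anc where "Anc x = {j. j < n \<and> reach n a j x}" for x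
  have finA: "finite (Anc x)" for x unfolding Anc_def by auto
  obtain b1 where b1: "b1 < n" and b1min: "\<And>c. c < n \<Longrightarrow> card (Anc b1) \<le> card (Anc c)"
    using ex_has_least_nat[of "\<lambda>c. c < n" 0 "\<lambda>c. card (Anc c)"] n by auto
  define inC where "inC i \<longleftrightarrow> i < n \<and> reach n a i b1" for i
  define inD where "inD i \<longleftrightarrow> \<not> reach n a b1 i" for i
  have Cr: "reach n a b1 c" if "inC c" for c
  proof -
    have c: "c < n" "reach n a c b1" using that unfolding inC_def by auto
    have "Anc c \<subseteq> Anc b1" unfolding Anc_def using c(2) by (auto intro: rtranclp_trans)
    moreover have "card (Anc b1) \<le> card (Anc c)" using b1min[OF c(1)] .
    ultimately have "Anc c = Anc b1" using finA by (intro card_seteq) auto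
    moreover have "b1 \<in> Anc b1" unfolding Anc_def using b1 by auto
    ultimately show ?thesis unfolding Anc_def by auto
  qed
  have CD: "\<not> inD i" if "inC i" for i using Cr[OF that] unfolding inD_def by simp
  have Ccl: "inC j" if "inC i" "a i j > 0" "j < n" for i j
  proof -
    have "edg n a j i" using that unfolding edg_def inC_def by auto
    then show ?thesis using that unfolding inC_def
      using converse_rtranclp_into_rtranclp[of "edg n a" j i b1] by blast
  qed
  have Dcl: "inD j" if "inD i" "i < n" "a i j > 0" "j < n" for i j
  proof -
    have "edg n a j i" using that unfolding edg_def by auto
    then show ?thesis using that unfolding inD_def
      using rtranclp.rtrancl_into_rtrancl[of "edg n a" b1 j i] by blast
  qed
  obtain d where d: "d < n" "inD d" using notall[OF b1] unfolding inD_def by blast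
  have nDn: "i < n" if "\<not> inD i" for i using reach_lt[of n a b1 i] that b1 unfolding inD_def by auto
  define T where "T y i = (if inC i then 1 else if inD i then 0 else (\<Sum>j<n. a i j * y j) / (\<Sum>j<n. a i j))" for y :: "nat \<Rightarrow> real" and i
  have Tmono: "T y i \<le> T y' i" if "\<And>j. y j \<le> y' j" for y y' i
  proof -
    have "(\<Sum>j<n. a i j * y j) \<le> (\<Sum>j<n. a i j * y' j)" if "\<not> inC i" "\<not> inD i"
    proof (rule sum_mono)
      fix j assume "j \<in> {..<n}"
      moreover have "i < n" using that nDn by blast
      ultimately show "a i j * y j \<le> a i j * y' j" using \<open>\<And>j. y j \<le> y' j\<close> nonneg
        by (intro mult_left_mono) auto
    qed
    moreover have "(\<Sum>j<n. a i j) \<ge> 0" if "\<not> inC i" "\<not> inD i"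
    proof -
      have "i < n" using that nDn by blast
      then show ?thesis using nonneg by (intro sum_nonneg) auto
    qed
    ultimately show ?thesis unfolding T_def by (auto intro: divide_right_mono)
  qed
  have Tbnd: "0 \<le> T y i \<and> T y i \<le> 1" if "\<And>j. 0 \<le> y j \<and> y j \<le> 1" for y i
  proof (cases "\<not> inC i \<and> \<not> inD i")
    case True
    have i: "i < n" using True nDn by blast
    have s0: "(\<Sum>j<n. a i j * y j) \<ge> 0" using nonneg i that by (intro sum_nonneg mult_nonneg_nonneg) auto
    have s1: "(\<Sum>j<n. a i j * y j) \<le> (\<Sum>j<n. a i j)"
    proof (rule sum_mono)
      fix j assume "j \<in> {..<n}"
      then show "a i j * y j \<le> a i j" using nonneg[OF i, of j] that[of j]
        by (simp add: mult_left_le)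
    qed
    have "(\<Sum>j<n. a i j * y j) / (\<Sum>j<n. a i j) \<le> 1"
      using s0 s1 by (cases "(\<Sum>j<n. a i j) = 0") (auto simp: divide_le_eq_1)
    moreover have "(\<Sum>j<n. a i j * y j) / (\<Sum>j<n. a i j) \<ge> 0"
      using s0 s1 by (intro divide_nonneg_nonneg) auto
    ultimately show ?thesis using True unfolding T_def by simp
  next
    case False then show ?thesis unfolding T_def by auto
  qed
  define y0 where "y0 i = (if inC i then 1 else 0 :: real)" for i
  define ys where "ys k = (T ^^ k) y0" for k
  have ysS: "ys (Suc k) = T (ys k)" for k unfolding ys_def by simp
  have ysb: "0 \<le> ys k i \<and> ys k i \<le> 1" for k i
  proof (induction k arbitrary: i)
    case 0 then show ?case unfolding ys_def y0_def by simp
  next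
    case (Suc k) then show ?case unfolding ysS by (intro Tbnd) auto
  qed
  have ysm: "ys k i \<le> ys (Suc k) i" for k i
  proof (induction k arbitrary: i)
    case 0
    have "y0 i \<le> T y0 i"
      using Tbnd[of y0 i] unfolding y0_def T_def by (auto simp: y0_def)
    then show ?case unfolding ys_def by simp
  next
    case (Suc k) then show ?case unfolding ysS[of "Suc k"] ysS[of k] by (intro Tmono) auto
  qed
  define Y where "Y i = (SUP k. ys k i)" for i
  have lim: "(\<lambda>k. ys k i) \<longlonglongrightarrow> Y i" for i
    unfolding Y_def
  proof (rule LIMSEQ_incseq_SUP)
    show "bdd_above (range (\<lambda>k. ys k i))" using ysb by (intro bdd_aboveI[of _ 1]) auto
    show "incseq (\<lambda>k. ys k i)" using ysm by (intro incseq_SucI) auto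
  qed
  have fp: "Y i = T Y i" for i
  proof -
    have "(\<lambda>k. ys (Suc k) i) \<longlonglongrightarrow> Y i" using LIMSEQ_Suc[OF lim] .
    moreover have "(\<lambda>k. ys (Suc k) i) \<longlonglongrightarrow> T Y i"
      unfolding ysS T_def divide_inverse by (auto intro!: tendsto_mult_right tendsto_sum tendsto_mult_left lim)
    ultimately show ?thesis by (rule LIMSEQ_unique)
  qed
  have Yb: "Y b1 = 1" using fp[of b1] b1 unfolding T_def inC_def by simp
  have Yd: "Y d = 0" using fp[of d] d CD unfolding T_def by auto
  have ker: "(\<Sum>j<n. a i j * (Y i - Y j)) = 0" if i: "i < n" for i
  proof (cases "inC i")
    case True
    have "a i j * (Y i - Y j) = 0" if "j < n" for j
    proof (cases "a i j > 0")
      case True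
      then have "inC j" using Ccl \<open>inC i\<close> that by blast
      then have "Y j = 1" "Y i = 1" using fp[of j] fp[of i] \<open>inC i\<close> unfolding T_def by auto
      then show ?thesis by simp
    next
      case False then have "a i j = 0" using nonneg[OF i that] by simp
      then show ?thesis by simp
    qed
    then show ?thesis by (intro sum.neutral) auto
  next
    case nC: False
    show ?thesis
    proof (cases "inD i")
      case True
      have "a i j * (Y i - Y j) = 0" if "j < n" for j
      proof (cases "a i j > 0")
        case True
        then have "inD j" using Dcl \<open>inD i\<close> that i by blast
        then have "Y j = 0" "Y i = 0" using fp[of j] fp[of i] \<open>inD i\<close> nC CD unfolding T_def by auto
        then show ?thesis by simp
      next
        case False then have "a i j = 0" using nonneg[OF i that] by simp
        then show ?thesis by simp
      qed
      then show ?thesis by (intro sum.neutral) auto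
    next
      case nD: False
      have Yi: "Y i = (\<Sum>j<n. a i j * Y j) / (\<Sum>j<n. a i j)" using fp[of i] nC nD unfolding T_def by simp
      show ?thesis
      proof (cases "(\<Sum>j<n. a i j) = 0")
        case True
        then have "\<forall>j\<in>{..<n}. a i j = 0" using nonneg i by (subst sum_nonneg_eq_0_iff[symmetric]) auto
        then show ?thesis by simp
      next
        case False
        then have "Y i * (\<Sum>j<n. a i j) = (\<Sum>j<n. a i j * Y j)" unfolding Yi by simp
        then have "(\<Sum>j<n. a i j * Y i) - (\<Sum>j<n. a i j * Y j) = 0"
          by (simp add: sum_distrib_left sum_distrib_right mult.commute)
        then show ?thesis by (simp add: algebra_simps sum_subtractf)
      qed
    qed
  qed
  show ?thesis using b1 d(1) Yb Yd ker by blast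
qed


lemma norm_e1: "norm (vector [1, 0, 0] :: real^3) = 1"
  unfolding norm_eq_sqrt_inner inner_vec_def sum_3 by simp

lemma qconj_qone: "qconj qone = qone"
  by (simp add: qconj_def qone_def vec_eq_iff forall_4)
lemma no_tree_no_consensus:
  assumes n: "n \<ge> 1" and nonneg: "\<And>i j. i < n \<Longrightarrow> j < n \<Longrightarrow> a i j \<ge> 0"
    and notree: "\<not> has_directed_spanning_tree n a"
  shows "\<not> achieves_output_consensus n a"
proof -
  obtain Y b d where bd: "b < n" "d < n" "Y b = (1::real)" "Y d = 0"
    and ker: "\<And>i. i < n \<Longrightarrow> (\<Sum>j<n. a i j * (Y i - Y j)) = 0"
    using no_tree_kernel[OF n nonneg notree] by blast
  define e1 where "e1 = (vector [1, 0, 0] :: real^3)"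
  define X where "X i = (qone, (1/2) *\<^sub>R hmul (pure ((2 * Y i) *\<^sub>R e1)) qone)" for i
  define x where "x i (t::real) = X i" for i t
  have unit: "unit_dq (X i)" for i
  proof -
    have "qone = cos (0/2) *\<^sub>R qone + sin (0/2) *\<^sub>R pure e1" by simp
    then have "\<exists>\<phi> na. 0 \<le> \<phi> \<and> \<phi> < 2*pi \<and> norm na = 1 \<and> qone = cos (\<phi>/2) *\<^sub>R qone + sin (\<phi>/2) *\<^sub>R pure na"
      using norm_e1 unfolding e1_def by (intro exI[of _ 0] exI[of _ e1]) (simp add: e1_def)
    then show ?thesis unfolding unit_dq_def X_def using norm_qone by blast
  qed
  have qlog1: "qlog qone = 0"
    by (simp add: qlog_def im_qone)
  have log: "dq_log (X i) = (0, Y i *\<^sub>R e1)" for i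
    unfolding dq_log_def dq_rot_def dq_trans_def X_def
    by (simp add: qlog1 hmul_qone qconj_qone im_scaleR im_pure)
  have sum0: "(\<Sum>j<n. a i j *\<^sub>R (dq_log (x i t) - dq_log (x j t))) = 0" if i: "i < n" for i t
  proof -
    have "(\<Sum>j<n. a i j *\<^sub>R (dq_log (x i t) - dq_log (x j t))) = (\<Sum>j<n. (0, (a i j * (Y i - Y j)) *\<^sub>R e1))"
      unfolding x_def log by (intro sum.cong) (auto simp: algebra_simps)
    also have "\<dots> = (0, (\<Sum>j<n. a i j * (Y i - Y j)) *\<^sub>R e1)"
      by (simp add: prod_eq_iff fst_sum snd_sum scaleR_sum_left)
    also have "\<dots> = 0" using ker[OF i] by (simp add: prod_eq_iff)
    finally show ?thesis .
  qed
  have Q80: "Q8 y 0 = 0" for y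
    unfolding Q8_def Let_def by (simp add: prod_eq_iff)
  have sol: "closed_loop_solution n a x"
    unfolding closed_loop_solution_def
  proof (intro allI impI conjI)
    fix i t assume i: "i < n" and t: "(0::real) \<le> t"
    show "unit_dq (x i t)" unfolding x_def by (rule unit)
    show "(x i has_vector_derivative - Q8 (x i t) (\<Sum>j<n. a i j *\<^sub>R (dq_log (x i t) - dq_log (x j t)))) (at t within {0..})"
      unfolding sum0[OF i] Q80 unfolding x_def by simp
  qed
  have diff: "dq_log (x b t) - dq_log (x d t) = (0, e1)" for t
    unfolding x_def log using bd by simp
  have "e1 \<noteq> 0" unfolding e1_def by (simp add: vec_eq_iff forall_3)
  then have "(0, e1) \<noteq> (0 :: pdq)" by (simp add: prod_eq_iff)
  then have "\<not> ((\<lambda>t. dq_log (x b t) - dq_log (x d t)) \<longlongrightarrow> 0) at_top"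
    unfolding diff by (simp add: tendsto_const_iff)
  then show ?thesis unfolding achieves_output_consensus_def using sol bd by blast
qed


lemma tree_is_tree: "has_directed_spanning_tree n a \<Longrightarrow> \<exists>par k. is_tree n a par k"
  unfolding has_directed_spanning_tree_def is_tree_def by blast

lemma lin_cons:
  fixes Y :: "nat \<Rightarrow> real \<Rightarrow> pdq" and L :: "pdq \<Rightarrow> real"
  assumes L: "bounded_linear L" and nonneg: "\<And>i j. i < n \<Longrightarrow> j < n \<Longrightarrow> a i j \<ge> 0"
    and d: "\<And>i t. i < n \<Longrightarrow> t \<ge> 0 \<Longrightarrow>
       (Y i has_vector_derivative - (\<Sum>j<n. a i j *\<^sub>R (Y i t - Y j t))) (at t within {0..})"
  shows "cons_sys n a (\<lambda>i t. L (Y i t))"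
proof
  fix i j assume "i < n" "j < n" then show "a i j \<ge> 0" by (rule nonneg)
next
  fix i t assume i: "i < n" and t: "(0::real) \<le> t"
  have "((\<lambda>t. L (Y i t)) has_vector_derivative L (- (\<Sum>j<n. a i j *\<^sub>R (Y i t - Y j t)))) (at t within {0..})"
    using bounded_linear.has_vector_derivative[OF L d[OF i t]] .
  moreover have "L (- (\<Sum>j<n. a i j *\<^sub>R (Y i t - Y j t))) = - (\<Sum>j<n. a i j * (L (Y i t) - L (Y j t)))"
  proof -
    have "L (\<Sum>j<n. a i j *\<^sub>R (Y i t - Y j t)) = (\<Sum>j<n. L (a i j *\<^sub>R (Y i t - Y j t)))"
      using linear_sum[OF bounded_linear.linear[OF L]] by (simp add: o_def)
    also have "\<dots> = (\<Sum>j<n. a i j * (L (Y i t) - L (Y j t)))"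
      using linear_scale[OF bounded_linear.linear[OF L]] linear_diff[OF bounded_linear.linear[OF L]] by simp
    finally show ?thesis using linear_neg[OF bounded_linear.linear[OF L]] by simp
  qed
  ultimately show "((\<lambda>t. L (Y i t)) has_real_derivative - (\<Sum>j<n. a i j * (L (Y i t) - L (Y j t)))) (at t within {0..})"
    by (simp add: has_real_derivative_iff_has_vector_derivative)
qed

lemma pdq_consensus:
  fixes Y :: "nat \<Rightarrow> real \<Rightarrow> pdq"
  assumes tree: "is_tree n a par k" and nonneg: "\<And>i j. i < n \<Longrightarrow> j < n \<Longrightarrow> a i j \<ge> 0"
    and d: "\<And>i t. i < n \<Longrightarrow> t \<ge> 0 \<Longrightarrow>
       (Y i has_vector_derivative - (\<Sum>j<n. a i j *\<^sub>R (Y i t - Y j t))) (at t within {0..})"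
    and i: "i < n" and j: "j < n"
  shows "((\<lambda>t. Y i t - Y j t) \<longlongrightarrow> 0) at_top"
proof -
  have comp: "((\<lambda>t. L (Y i t - Y j t)) \<longlongrightarrow> 0) at_top" if L: "bounded_linear L" for L :: "pdq \<Rightarrow> real"
  proof -
    interpret cs: cons_sys n a "\<lambda>i t. L (Y i t)" by (rule lin_cons[OF L nonneg d])
    have "((\<lambda>t. L (Y i t) - L (Y j t)) \<longlongrightarrow> 0) at_top" by (rule cs.converge[OF tree i j])
    then show ?thesis using linear_diff[OF bounded_linear.linear[OF L]] by simp
  qed
  have blf: "bounded_linear (\<lambda>p::pdq. fst p $ c)" for c
    by (intro bounded_linear_compose[OF bounded_linear_vec_nth bounded_linear_fst])
  have bls: "bounded_linear (\<lambda>p::pdq. snd p $ c)" for c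
    by (intro bounded_linear_compose[OF bounded_linear_vec_nth bounded_linear_snd])
  have f: "((\<lambda>t. fst (Y i t - Y j t)) \<longlongrightarrow> 0) at_top"
    by (rule vec_tendstoI) (use comp[OF blf] in simp)
  have s: "((\<lambda>t. snd (Y i t - Y j t)) \<longlongrightarrow> 0) at_top"
    by (rule vec_tendstoI) (use comp[OF bls] in simp)
  have "((\<lambda>t. (fst (Y i t - Y j t), snd (Y i t - Y j t))) \<longlongrightarrow> (0, 0)) at_top"
    by (rule tendsto_Pair[OF f s])
  then show ?thesis unfolding prod.collapse by (simp only: zero_prod_def)
qed

lemma log_deriv:
  fixes x :: "nat \<Rightarrow> real \<Rightarrow> dq"
  assumes sol: "closed_loop_solution n a x" and i: "i < n" and t: "t \<ge> 0"
  shows "((\<lambda>s. dq_log (x i s)) has_vector_derivative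
          - (\<Sum>j<n. a i j *\<^sub>R (dq_log (x i t) - dq_log (x j t)))) (at t within {0..})"
proof -
  define W where "W = (\<Sum>j<n. a i j *\<^sub>R (dq_log (x i t) - dq_log (x j t)))"
  have unit: "\<And>s. s \<ge> 0 \<Longrightarrow> unit_dq (x i s)" using sol i unfolding closed_loop_solution_def by blast
  have der: "(x i has_vector_derivative - Q8 (x i t) (fst W, snd W)) (at t within {0..})"
    using sol i t unfolding closed_loop_solution_def W_def by simp
  have r: "((\<lambda>s. qlog (fst (x i s))) has_vector_derivative - fst W) (at t within {0..})"
    by (rule rot_deriv[OF unit t der])
  have p: "((\<lambda>s. (1/2) *\<^sub>R dq_trans (x i s)) has_vector_derivative - snd W) (at t within {0..})"
    by (rule trans_deriv[OF unit t der])
  have "((\<lambda>s. (qlog (fst (x i s)), (1/2) *\<^sub>R dq_trans (x i s))) has_vector_derivative (- fst W, - snd W)) (at t within {0..})"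
    by (rule has_vector_derivative_Pair[OF r p])
  moreover have "(\<lambda>s. dq_log (x i s)) = (\<lambda>s. (qlog (fst (x i s)), (1/2) *\<^sub>R dq_trans (x i s)))"
    by (simp add: dq_log_def dq_rot_def fun_eq_iff)
  moreover have "(- fst W, - snd W) = - W" by (cases W) simp
  ultimately have "((\<lambda>s. dq_log (x i s)) has_vector_derivative - W) (at t within {0..})" by simp
  then show ?thesis unfolding W_def .
qed

lemma tree_consensus:
  assumes nonneg: "\<And>i j. i < n \<Longrightarrow> j < n \<Longrightarrow> a i j \<ge> 0" and tree: "has_directed_spanning_tree n a"
  shows "achieves_output_consensus n a"
  unfolding achieves_output_consensus_def
proof (rule allI, rule impI)
  fix x assume sol: "closed_loop_solution n a x"
  obtain par k where tr: "is_tree n a par k" using tree_is_tree[OF tree] by blast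
  show "\<forall>i<n. \<forall>j<n. ((\<lambda>t. dq_log (x i t) - dq_log (x j t)) \<longlongrightarrow> 0) at_top"
    using pdq_consensus[OF tr nonneg log_deriv[OF sol]] by blast
qed

theorem theorem8:
  fixes n :: nat and a :: "nat \<Rightarrow> nat \<Rightarrow> real"
  assumes "n \<ge> 1"
    and "\<And>i j. i < n \<Longrightarrow> j < n \<Longrightarrow> a i j \<ge> 0"
    and "\<And>i. i < n \<Longrightarrow> a i i = 0"
  shows "achieves_output_consensus n a \<longleftrightarrow> has_directed_spanning_tree n a"
proof -
  have nn: "\<And>i j. i < n \<Longrightarrow> j < n \<Longrightarrow> a i j \<ge> 0" by (rule assms(2))
  show ?thesis using tree_consensus[of n a, OF nn] no_tree_no_consensus[of n a, OF assms(1) nn] by blast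
qed

end
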